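(* Let $\mathcal T$ be an atomic orbital category. The restricted map $\nabla_u:\mathrm{wIndSys}^{uni}_{\mathcal T}\to\mathrm{Fam}_{\mathcal T}$ has a fully faithful left adjoint given by $\mathcal F\mapsto\underline{\mathbb F}^0_{\mathcal T}\cup E^{\mathcal T}_{\mathcal F}\underline{\mathbb F}^\infty_{\mathcal F}$ and a fully faithful right adjoint; hence it is a cocartesian fibration, with cocartesian transport along $\mathcal F\le\mathcal F'$ given by $\mathcal C\mapsto\mathcal C\vee E^{\mathcal T}_{\mathcal F'}\underline{\mathbb F}^\infty_{\mathcal F'}$.
   Context: For a small category $\mathcal T$, $\mathbb F_{\mathcal T}$ is the full subcategory of $\mathrm{Fun}(\mathcal T^{op},\mathrm{Set})$ on finite coproducts of representables; $\mathcal T$ is orbital if $\mathbb F_{\mathcal T}$ has pullbacks, and atomic if every morphism of $\mathcal T$ admitting a section is an isomorphism. $\mathbb F_V:=\mathbb F_{\mathcal T,/V}$, $*_V$ terminal, $\emptyset_V$ initial, $n\cdot S$ the $n$-fold coproduct; for $U\to V$, $\mathrm{Res}^V_U$ is pullback and $\mathrm{Ind}^V_U$ postcomposition. A full $\mathcal T$-subcategory assigns isomorphism-closed classes $\mathcal C_V\subseteq\mathrm{Ob}\,\mathbb F_V$ stable under restriction. For $S\in\mathbb F_V$ with orbits $U$ and $T_U\in\mathbb F_U$, $\coprod_U^ST_U:=\coprod_U\mathrm{Ind}_U^VT_U$. A $\mathcal T$-weak indexing system is a full $\mathcal T$-subcategory with $\mathcal C_V\neq\emptyset\Rightarrow *_V\in\mathcal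 C_V$ and closed under $\coprod^S_UT_U$ for $S\in\mathcal C_V$, $T_U\in\mathcal C_U$; these form a lattice under inclusion (join $\vee$). It is unital if every $\mathcal C_V$ is nonempty and $S\sqcup S'\in\mathcal C_V\Rightarrow S,S'\in\mathcal C_V$; $\mathrm{wIndSys}^{uni}_{\mathcal T}$ is the poset of these. A $\mathcal T$-family is a full subcategory $\mathcal F$ with $V\to W$, $W\in\mathcal F\Rightarrow V\in\mathcal F$; $\mathrm{Fam}_{\mathcal T}$ their poset. $\nabla_u(\mathcal C)=\{V\mid 2\cdot *_V\in\mathcal C_V\}$. $\underline{\mathbb F}^0_{\mathcal T}$ has $V$-values $\{\emptyset_V,*_V\}$; $E^{\mathcal T}_{\mathcal F}\underline{\mathbb F}^\infty_{\mathcal F}$ has $V$-values $\{n\cdot *_V\mid n\in\mathbb N\}$ for $V\in\mathcal F$ and $\emptyset$ otherwise. Adjoints of monotone maps: $L\dashv\pi$ iff $L(x)\le y\iff x\le\pi(y)$; fully faithful means order-reflecting. A monotone $\pi:P\to Q$ is a cocartesian fibration if for all $q\le q'$ and $x\in\pi^{-1}(q)$ there is $t_q^{q'}x\in\pi^{-1}(q')$ with: for all $y$ with $q'\le\pi(y)$, $x\le y\iff t_q^{q'}x\le y$ ($t_q^{q'}$ is cocartesian transport). *)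

theory Defs
  imports Main
begin

record ('o, 'm) cat =
  Obj :: "'o set"
  Arr :: "'m set"
  Dom :: "'m \<Rightarrow> 'o"
  Cod :: "'m \<Rightarrow> 'o"
  Idt :: "'o \<Rightarrow> 'm"
  Comp :: "'m \<Rightarrow> 'm \<Rightarrow> 'm"   (* Comp C g f = g o f *)

definition is_category :: "('o, 'm) cat \<Rightarrow> bool" where
  "is_category C \<longleftrightarrow>
     (\<forall>V\<in>Obj C. Idt C V \<in> Arr C \<and> Dom C (Idt C V) = V \<and> Cod C (Idt C V) = V) \<and>
     (\<forall>f\<in>Arr C. Dom C f \<in> Obj C \<and> Cod C f \<in> Obj C) \<and>
     (\<forall>f\<in>Arr C. \<forall>g\<in>Arr C. Dom C g = Cod C f \<longrightarrow>
        Comp C g f \<in> Arr C \<and> Dom C (Comp C g f) = Dom C f \<and> Cod C (Comp C g f) = Cod C g) \<and>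
     (\<forall>f\<in>Arr C. Comp C (Idt C (Cod C f)) f = f \<and> Comp C f (Idt C (Dom C f)) = f) \<and>
     (\<forall>f\<in>Arr C. \<forall>g\<in>Arr C. \<forall>h\<in>Arr C. Dom C g = Cod C f \<longrightarrow> Dom C h = Cod C g \<longrightarrow>
        Comp C h (Comp C g f) = Comp C (Comp C h g) f)"

definition is_iso_arr :: "('o, 'm) cat \<Rightarrow> 'm \<Rightarrow> bool" where
  "is_iso_arr C f \<longleftrightarrow> f \<in> Arr C \<and>
     (\<exists>g\<in>Arr C. Dom C g = Cod C f \<and> Cod C g = Dom C f \<and>
        Comp C g f = Idt C (Dom C f) \<and> Comp C f g = Idt C (Cod C f))"

definition atomic :: "('o, 'm) cat \<Rightarrow> bool" where
  "atomic C \<longleftrightarrow> (\<forall>f\<in>Arr C. (\<exists>s\<in>Arr C. Dom C s = Cod C f \<and> Cod C s = Dom C f \<and>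
                         Comp C f s = Idt C (Cod C f)) \<longrightarrow> is_iso_arr C f)"

text \<open>By the Yoneda lemma (representables are connected), the full subcategory of presheaves
  on finite coproducts of representables is modelled as follows: an object is a finite list
  of objects of T (the summands), and a morphism from xs to ys is a list assigning to each
  summand i of xs a summand j of ys together with a morphism xs!i -> ys!j of T.\<close>

definition fobj :: "('o, 'm) cat \<Rightarrow> 'o list \<Rightarrow> bool" where
  "fobj C xs \<longleftrightarrow> set xs \<subseteq> Obj C"

definition fmor :: "('o, 'm) cat \<Rightarrow> 'o list \<Rightarrow> 'o list \<Rightarrow> (nat \<times> 'm) list \<Rightarrow> bool" where
  "fmor C xs ys h \<longleftrightarrow> length h = length xs \<and>
     (\<forall>i<length xs. fst (h!i) < length ys \<and> snd (h!i) \<in> Arr C \<and>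
        Dom C (snd (h!i)) = xs!i \<and> Cod C (snd (h!i)) = ys!(fst (h!i)))"

text \<open>Composition: fcomp C k h = k o h.\<close>
definition fcomp :: "('o, 'm) cat \<Rightarrow> (nat \<times> 'm) list \<Rightarrow> (nat \<times> 'm) list \<Rightarrow> (nat \<times> 'm) list" where
  "fcomp C k h = map (\<lambda>(j, m). (fst (k!j), Comp C (snd (k!j)) m)) h"

definition is_pullback :: "('o, 'm) cat \<Rightarrow> 'o list \<Rightarrow> 'o list \<Rightarrow> 'o list \<Rightarrow>
    (nat \<times> 'm) list \<Rightarrow> (nat \<times> 'm) list \<Rightarrow> 'o list \<Rightarrow> (nat \<times> 'm) list \<Rightarrow> (nat \<times> 'm) list \<Rightarrow> bool" where
  "is_pullback C X Y Z f g P p1 p2 \<longleftrightarrow>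
     fobj C X \<and> fobj C Y \<and> fobj C Z \<and> fobj C P \<and>
     fmor C X Z f \<and> fmor C Y Z g \<and> fmor C P X p1 \<and> fmor C P Y p2 \<and>
     fcomp C f p1 = fcomp C g p2 \<and>
     (\<forall>Q q1 q2. fobj C Q \<and> fmor C Q X q1 \<and> fmor C Q Y q2 \<and> fcomp C f q1 = fcomp C g q2 \<longrightarrow>
        (\<exists>!u. fmor C Q P u \<and> fcomp C p1 u = q1 \<and> fcomp C p2 u = q2))"

definition orbital :: "('o, 'm) cat \<Rightarrow> bool" where
  "orbital C \<longleftrightarrow> (\<forall>X Y Z f g. fobj C X \<and> fobj C Y \<and> fobj C Z \<and> fmor C X Z f \<and> fmor C Y Z g \<longrightarrow>
      (\<exists>P p1 p2. is_pullback C X Y Z f g P p1 p2))"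

text \<open>An object of F_V = F_{T,/V} is a finite coproduct of representables with a map to V,
  i.e. a list of arrows of T with codomain V (one per orbit).\<close>

definition fVobj :: "('o, 'm) cat \<Rightarrow> 'o \<Rightarrow> 'm list \<Rightarrow> bool" where
  "fVobj C V S \<longleftrightarrow> V \<in> Obj C \<and> (\<forall>s\<in>set S. s \<in> Arr C \<and> Cod C s = V)"

definition fund :: "('o, 'm) cat \<Rightarrow> 'm list \<Rightarrow> 'o list" where
  "fund C S = map (Dom C) S"

definition fstr :: "'m list \<Rightarrow> (nat \<times> 'm) list" where
  "fstr S = map (\<lambda>s. (0, s)) S"

definition fV_iso :: "('o, 'm) cat \<Rightarrow> 'm list \<Rightarrow> 'm list \<Rightarrow> bool" where
  "fV_iso C S S' \<longleftrightarrow> (\<exists>\<sigma> \<phi>. bij_betw \<sigma> {..<length S} {..<length S'} \<and>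
     (\<forall>i<length S. is_iso_arr C (\<phi> i) \<and> Dom C (\<phi> i) = Dom C (S!i) \<and>
        Cod C (\<phi> i) = Dom C (S'!(\<sigma> i)) \<and> Comp C (S'!(\<sigma> i)) (\<phi> i) = S!i))"

definition is_restriction :: "('o, 'm) cat \<Rightarrow> 'm \<Rightarrow> 'm list \<Rightarrow> 'm list \<Rightarrow> bool" where
  "is_restriction C g S P \<longleftrightarrow> (\<exists>q. is_pullback C (fund C S) [Dom C g] [Cod C g]
      (fstr S) [(0, g)] (fund C P) q (fstr P))"

text \<open>Induction Ind^V_U along an orbit s : U -> V (postcomposition), and the
  coproduct over orbits of S of Ind T_U.\<close>
definition find :: "('o, 'm) cat \<Rightarrow> 'm \<Rightarrow> 'm list \<Rightarrow> 'm list" where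
  "find C s T = map (Comp C s) T"

definition fcoprod :: "('o, 'm) cat \<Rightarrow> 'm list \<Rightarrow> 'm list list \<Rightarrow> 'm list" where
  "fcoprod C S Ts = concat (map (\<lambda>(s, T). find C s T) (zip S Ts))"

type_synonym ('o, 'm) tsubcat = "'o \<Rightarrow> 'm list set"

definition full_tsubcat :: "('o, 'm) cat \<Rightarrow> ('o, 'm) tsubcat \<Rightarrow> bool" where
  "full_tsubcat C \<C> \<longleftrightarrow>
     (\<forall>V. V \<notin> Obj C \<longrightarrow> \<C> V = {}) \<and>
     (\<forall>V\<in>Obj C. \<forall>S\<in>\<C> V. fVobj C V S) \<and>
     (\<forall>V\<in>Obj C. \<forall>S\<in>\<C> V. \<forall>S'. fVobj C V S' \<and> fV_iso C S S' \<longrightarrow> S' \<in> \<C> V) \<and>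
     (\<forall>g\<in>Arr C. \<forall>S\<in>\<C> (Cod C g). \<forall>P. fVobj C (Dom C g) P \<and> is_restriction C g S P
        \<longrightarrow> P \<in> \<C> (Dom C g))"

definition wIndSys :: "('o, 'm) cat \<Rightarrow> ('o, 'm) tsubcat \<Rightarrow> bool" where
  "wIndSys C \<C> \<longleftrightarrow> full_tsubcat C \<C> \<and>
     (\<forall>V\<in>Obj C. \<C> V \<noteq> {} \<longrightarrow> [Idt C V] \<in> \<C> V) \<and>
     (\<forall>V\<in>Obj C. \<forall>S\<in>\<C> V. \<forall>Ts. length Ts = length S \<and>
        (\<forall>i<length S. Ts!i \<in> \<C> (Dom C (S!i))) \<longrightarrow> fcoprod C S Ts \<in> \<C> V)"

definition uni_wIndSys :: "('o, 'm) cat \<Rightarrow> ('o, 'm) tsubcat \<Rightarrow> bool" where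
  "uni_wIndSys C \<C> \<longleftrightarrow> wIndSys C \<C> \<and>
     (\<forall>V\<in>Obj C. \<C> V \<noteq> {}) \<and>
     (\<forall>V\<in>Obj C. \<forall>S S'. S @ S' \<in> \<C> V \<longrightarrow> S \<in> \<C> V \<and> S' \<in> \<C> V)"

definition wjoin :: "('o, 'm) cat \<Rightarrow> ('o, 'm) tsubcat \<Rightarrow> ('o, 'm) tsubcat \<Rightarrow> ('o, 'm) tsubcat" where
  "wjoin C \<C> \<D> = (\<lambda>V. \<Inter>{\<E> V | \<E>. wIndSys C \<E> \<and> \<C> \<le> \<E> \<and> \<D> \<le> \<E>})"

definition is_family :: "('o, 'm) cat \<Rightarrow> 'o set \<Rightarrow> bool" where
  "is_family C \<F> \<longleftrightarrow> \<F> \<subseteq> Obj C \<and>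
     (\<forall>f\<in>Arr C. Cod C f \<in> \<F> \<longrightarrow> Dom C f \<in> \<F>)"

definition nabla_u :: "('o, 'm) cat \<Rightarrow> ('o, 'm) tsubcat \<Rightarrow> 'o set" where
  "nabla_u C \<C> = {V \<in> Obj C. replicate 2 (Idt C V) \<in> \<C> V}"

definition F0 :: "('o, 'm) cat \<Rightarrow> ('o, 'm) tsubcat" where
  "F0 C = (\<lambda>V. if V \<in> Obj C then {S. fVobj C V S \<and> (fV_iso C S [] \<or> fV_iso C S [Idt C V])} else {})"

definition EFinf :: "('o, 'm) cat \<Rightarrow> 'o set \<Rightarrow> ('o, 'm) tsubcat" where
  "EFinf C \<F> = (\<lambda>V. if V \<in> \<F> \<and> V \<in> Obj C then
      {S. fVobj C V S \<and> (\<exists>n. fV_iso C S (replicate n (Idt C V)))} else {})"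

end

theory Submission
  imports Defs
begin


locale tcat =
  fixes T :: "('o, 'm) cat"
  assumes cat: "is_category T"
begin

definition hom :: "'m \<Rightarrow> 'o \<Rightarrow> 'o \<Rightarrow> bool" where
  "hom f A B \<longleftrightarrow> f \<in> Arr T \<and> Dom T f = A \<and> Cod T f = B"

lemma homI[intro]: "f \<in> Arr T \<Longrightarrow> hom f (Dom T f) (Cod T f)"
  by (simp add: hom_def)

lemma homD: "hom f A B \<Longrightarrow> f \<in> Arr T" "hom f A B \<Longrightarrow> Dom T f = A" "hom f A B \<Longrightarrow> Cod T f = B"
  by (auto simp: hom_def)

lemma arr_obj: "f \<in> Arr T \<Longrightarrow> Dom T f \<in> Obj T" "f \<in> Arr T \<Longrightarrow> Cod T f \<in> Obj T"
  using cat unfolding is_category_def by auto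

lemma hom_obj: "hom f A B \<Longrightarrow> A \<in> Obj T" "hom f A B \<Longrightarrow> B \<in> Obj T"
  using arr_obj by (auto simp: hom_def)

lemma comp_hom[intro]: "hom f A B \<Longrightarrow> hom g B C \<Longrightarrow> hom (Comp T g f) A C"
  using cat unfolding is_category_def hom_def by auto

lemma id_hom[intro]: "A \<in> Obj T \<Longrightarrow> hom (Idt T A) A A"
  using cat unfolding is_category_def hom_def by auto

lemma id_left[simp]: "hom f A B \<Longrightarrow> Comp T (Idt T B) f = f"
  using cat unfolding is_category_def hom_def by auto

lemma id_right[simp]: "hom f A B \<Longrightarrow> Comp T f (Idt T A) = f"
  using cat unfolding is_category_def hom_def by auto

lemma assoc: "hom f A B \<Longrightarrow> hom g B C \<Longrightarrow> hom h C D \<Longrightarrow>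
    Comp T h (Comp T g f) = Comp T (Comp T h g) f"
  using cat unfolding is_category_def hom_def by metis

definition iso :: "'m \<Rightarrow> bool" where "iso f = is_iso_arr T f"

definition inv :: "'m \<Rightarrow> 'm" where
  "inv f = (SOME g. g \<in> Arr T \<and> Dom T g = Cod T f \<and> Cod T g = Dom T f \<and>
        Comp T g f = Idt T (Dom T f) \<and> Comp T f g = Idt T (Cod T f))"

lemma inv_props:
  assumes "iso f"
  shows "hom (inv f) (Cod T f) (Dom T f)" "Comp T (inv f) f = Idt T (Dom T f)"
    "Comp T f (inv f) = Idt T (Cod T f)"
proof -
  have "\<exists>g. g \<in> Arr T \<and> Dom T g = Cod T f \<and> Cod T g = Dom T f \<and>
        Comp T g f = Idt T (Dom T f) \<and> Comp T f g = Idt T (Cod T f)"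
    using assms unfolding iso_def is_iso_arr_def by blast
  from someI_ex[OF this] show "hom (inv f) (Cod T f) (Dom T f)" "Comp T (inv f) f = Idt T (Dom T f)"
    "Comp T f (inv f) = Idt T (Cod T f)" unfolding inv_def hom_def by auto
qed

lemma iso_arr: "iso f \<Longrightarrow> f \<in> Arr T"
  by (simp add: iso_def is_iso_arr_def)

lemma isoI: "hom f A B \<Longrightarrow> hom g B A \<Longrightarrow> Comp T g f = Idt T A \<Longrightarrow> Comp T f g = Idt T B \<Longrightarrow> iso f"
  unfolding iso_def is_iso_arr_def hom_def by auto

lemma inv_iso: "iso f \<Longrightarrow> iso (inv f)"
  using inv_props[of f] iso_arr[of f]
  by (intro isoI[of "inv f" "Cod T f" "Dom T f" f]) (auto simp: hom_def)

lemma id_iso: "A \<in> Obj T \<Longrightarrow> iso (Idt T A)"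
  using id_left[OF id_hom[of A]] by (intro isoI[of _ A A "Idt T A"]) auto

lemma comp_iso:
  assumes f: "iso f" and g: "iso g" and "Dom T g = Cod T f"
  shows "iso (Comp T g f)"
proof -
  let ?A = "Dom T f" and ?B = "Cod T f" and ?C = "Cod T g"
  have hf: "hom f ?A ?B" and hg: "hom g ?B ?C" using assms iso_arr by (auto simp: hom_def)
  have hfi: "hom (inv f) ?B ?A" using inv_props(1)[OF f] .
  have hgi: "hom (inv g) ?C ?B" using inv_props(1)[OF g] assms by simp
  have "Comp T (Comp T (inv f) (inv g)) (Comp T g f) = Idt T ?A"
  proof -
    have "Comp T (Comp T (inv f) (inv g)) (Comp T g f) = Comp T (inv f) (Comp T (inv g) (Comp T g f))"
      using assoc hf hg hgi hfi by (metis comp_hom)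
    also have "Comp T (inv g) (Comp T g f) = Comp T (Comp T (inv g) g) f" using assoc hf hg hgi by metis
    also have "\<dots> = f" using inv_props(2)[OF g] assms hf by simp
    finally show ?thesis using inv_props(2)[OF f] by simp
  qed
  moreover have "Comp T (Comp T g f) (Comp T (inv f) (inv g)) = Idt T ?C"
  proof -
    have "Comp T (Comp T g f) (Comp T (inv f) (inv g)) = Comp T g (Comp T f (Comp T (inv f) (inv g)))"
      using assoc hf hg hgi hfi by (metis comp_hom)
    also have "Comp T f (Comp T (inv f) (inv g)) = Comp T (Comp T f (inv f)) (inv g)" using assoc hf hgi hfi by metis
    also have "\<dots> = inv g" using inv_props(3)[OF f] hgi by simp
    finally show ?thesis using inv_props(3)[OF g] by simp
  qed
  ultimately show ?thesis
    by (intro isoI[of _ ?A ?C "Comp T (inv f) (inv g)"]) (use hf hg hfi hgi in auto)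
qed

lemma iso_cancel_right:
  assumes "iso e" "hom x (Cod T e) C" "hom y (Cod T e) C" "Comp T x e = Comp T y e"
  shows "x = y"
proof -
  have he: "hom e (Dom T e) (Cod T e)" using assms iso_arr by auto
  have hi: "hom (inv e) (Cod T e) (Dom T e)" using inv_props assms by auto
  have "x = Comp T (Comp T x e) (inv e)"
    using assoc[OF hi he assms(2)] inv_props(3)[OF assms(1)] assms(2) by simp
  also have "\<dots> = Comp T (Comp T y e) (inv e)" using assms by simp
  also have "\<dots> = y" using assoc[OF hi he assms(3)] inv_props(3)[OF assms(1)] assms(3) by simp
  finally show ?thesis .
qed

lemma iso_cancel_left:
  assumes "iso e" "hom x C (Dom T e)" "hom y C (Dom T e)" "Comp T e x = Comp T e y"
  shows "x = y"
proof -
  have he: "hom e (Dom T e) (Cod T e)" using assms iso_arr by auto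
  have hi: "hom (inv e) (Cod T e) (Dom T e)" using inv_props assms by auto
  have "x = Comp T (inv e) (Comp T e x)"
    using assoc[OF assms(2) he hi] inv_props(2)[OF assms(1)] assms(2) by simp
  also have "\<dots> = Comp T (inv e) (Comp T e y)" using assms by simp
  also have "\<dots> = y" using assoc[OF assms(3) he hi] inv_props(2)[OF assms(1)] assms(3) by simp
  finally show ?thesis .
qed

lemma section_iso:
  assumes "iso f" "hom c (Cod T f) (Dom T f)" "Comp T f c = Idt T (Cod T f)"
  shows "c = inv f"
  using iso_cancel_left[OF assms(1) assms(2), of "inv f"] inv_props[OF assms(1)] assms by simp

end



lemma fcomp_nth: "k < length h \<Longrightarrow> fcomp C kk h ! k = (fst (kk ! fst (h!k)), Comp C (snd (kk ! fst (h!k))) (snd (h!k)))"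
  by (simp add: fcomp_def split_beta)

lemma fcomp_single: "fcomp C kk [(j,m)] = [(fst (kk ! j), Comp C (snd (kk ! j)) m)]"
  by (simp add: fcomp_def)

lemma fstr_nth[simp]: "k < length S \<Longrightarrow> fstr S ! k = (0, S!k)" by (simp add: fstr_def)
lemma fund_nth[simp]: "k < length S \<Longrightarrow> fund C S ! k = Dom C (S!k)" by (simp add: fund_def)
lemma fstr_len[simp]: "length (fstr S) = length S" by (simp add: fstr_def)
lemma fund_len[simp]: "length (fund C S) = length S" by (simp add: fund_def)

context tcat
begin

lemma fVobjD: "fVobj T V S \<Longrightarrow> k < length S \<Longrightarrow> hom (S!k) (Dom T (S!k)) V"
  unfolding fVobj_def hom_def by auto

lemma fVobj_V: "fVobj T V S \<Longrightarrow> V \<in> Obj T" unfolding fVobj_def by auto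

lemma fV_iso_len: "fV_iso T S S' \<Longrightarrow> length S = length S'"
  unfolding fV_iso_def using bij_betw_same_card by fastforce

lemma fV_iso_rep:
  assumes "fVobj T V S"
  shows "fV_iso T S (replicate n (Idt T V)) \<longleftrightarrow> length S = n \<and> (\<forall>s\<in>set S. iso s)"
proof
  assume a: "fV_iso T S (replicate n (Idt T V))"
  then have l: "length S = n" using fV_iso_len by fastforce
  obtain \<sigma> \<phi> where b: "bij_betw \<sigma> {..<length S} {..<n}" and
    c: "\<forall>i<length S. is_iso_arr T (\<phi> i) \<and> Dom T (\<phi> i) = Dom T (S!i) \<and>
        Cod T (\<phi> i) = Dom T (replicate n (Idt T V)!(\<sigma> i)) \<and> Comp T (replicate n (Idt T V)!(\<sigma> i)) (\<phi> i) = S!i"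
    using a unfolding fV_iso_def by auto
  have "iso (S!i)" if "i < length S" for i
  proof -
    have s: "\<sigma> i < n" using b that unfolding bij_betw_def by auto
    have V: "V \<in> Obj T" using assms fVobj_V by auto
    have "Dom T (Idt T V) = V" using id_hom[OF V] homD by auto
    then have h: "hom (\<phi> i) (Dom T (S!i)) V" using c that s unfolding hom_def iso_def[symmetric]
      using iso_arr iso_def by auto
    have "S!i = \<phi> i" using c that s id_left[OF h] by auto
    then show ?thesis using c that iso_def by auto
  qed
  then show "length S = n \<and> (\<forall>s\<in>set S. iso s)" using l by (auto simp: in_set_conv_nth)
next
  assume a: "length S = n \<and> (\<forall>s\<in>set S. iso s)"
  have V: "V \<in> Obj T" using assms fVobj_V by auto
  have dV: "Dom T (Idt T V) = V" using id_hom[OF V] homD by auto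
  show "fV_iso T S (replicate n (Idt T V))"
    unfolding fV_iso_def
  proof (intro exI[of _ id] exI[of _ "\<lambda>i. S!i"] conjI allI impI)
    show "bij_betw id {..<length S} {..<length (replicate n (Idt T V))}" using a by simp
  next
    fix i assume i: "i < length S"
    have h: "hom (S!i) (Dom T (S!i)) V" using fVobjD[OF assms i] .
    show "is_iso_arr T (S!i)" using a i iso_def by auto
    show "Dom T (S ! i) = Dom T (S ! i)" by simp
    show "Cod T (S ! i) = Dom T (replicate n (Idt T V) ! id i)" using a i h dV homD by auto
    show "Comp T (replicate n (Idt T V) ! id i) (S ! i) = S ! i" using a i h by auto
  qed
qed

lemma fV_iso_rep2:
  assumes "fVobj T V S" "\<forall>s\<in>set S. iso s"
  shows "fV_iso T (replicate (length S) (Idt T V)) S"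
proof -
  have V: "V \<in> Obj T" using assms fVobj_V by auto
  have dV: "Dom T (Idt T V) = V" using id_hom[OF V] homD by auto
  show ?thesis
    unfolding fV_iso_def
  proof (intro exI[of _ id] exI[of _ "\<lambda>i. inv (S!i)"] conjI allI impI)
    show "bij_betw id {..<length (replicate (length S) (Idt T V))} {..<length S}" by simp
  next
    fix i assume i: "i < length (replicate (length S) (Idt T V))"
    then have i': "i < length S" by simp
    have h: "hom (S!i) (Dom T (S!i)) V" using fVobjD[OF assms(1) i'] .
    have iso: "iso (S!i)" using assms i' by auto
    show "is_iso_arr T (inv (S!i))" using inv_iso[OF iso] iso_def by auto
    show "Dom T (inv (S ! i)) = Dom T (replicate (length S) (Idt T V) ! i)"
      using inv_props(1)[OF iso] h i' dV by (auto simp: hom_def)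
    show "Cod T (inv (S ! i)) = Dom T (S ! id i)"
      using inv_props(1)[OF iso] by (auto simp: hom_def)
    show "Comp T (S ! id i) (inv (S ! i)) = replicate (length S) (Idt T V) ! i"
      using inv_props(3)[OF iso] h i' by (auto simp: hom_def)
  qed
qed

lemma fV_iso_alliso:
  assumes "fVobj T V S'" "fV_iso T S S'" "\<forall>s\<in>set S. iso s"
  shows "\<forall>s\<in>set S'. iso s"
proof -
  obtain \<sigma> \<phi> where b: "bij_betw \<sigma> {..<length S} {..<length S'}" and
    c: "\<forall>i<length S. is_iso_arr T (\<phi> i) \<and> Dom T (\<phi> i) = Dom T (S!i) \<and>
        Cod T (\<phi> i) = Dom T (S'!(\<sigma> i)) \<and> Comp T (S'!(\<sigma> i)) (\<phi> i) = S!i"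
    using assms unfolding fV_iso_def by auto
  have "iso (S'!j)" if j: "j < length S'" for j
  proof -
    have "j \<in> \<sigma> ` {..<length S}" using b j unfolding bij_betw_def by auto
    then obtain i where i: "i < length S" "\<sigma> i = j" by auto
    have ip: "iso (\<phi> i)" using c i iso_def by auto
    have hp: "hom (\<phi> i) (Dom T (\<phi> i)) (Cod T (\<phi> i))" using iso_arr[OF ip] by auto
    have hs: "hom (S'!j) (Cod T (\<phi> i)) V" using fVobjD[OF assms(1) j] c i by auto
    have hi: "hom (inv (\<phi> i)) (Cod T (\<phi> i)) (Dom T (\<phi> i))" using inv_props[OF ip] by auto
    have "S'!j = Comp T (S!i) (inv (\<phi> i))"
      using assoc[OF hi hp hs] inv_props(3)[OF ip] c i hs by auto
    moreover have "iso (S!i)" using assms(3) i by auto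
    ultimately show ?thesis using comp_iso[OF inv_iso[OF ip] \<open>iso (S!i)\<close>] inv_props(1)[OF ip] c i
      by (auto simp: hom_def)
  qed
  then show ?thesis by (auto simp: in_set_conv_nth)
qed

lemma fV_iso_single:
  assumes "hom x A B" "iso e" "Cod T e = A"
  shows "fV_iso T [x] [Comp T x e]"
  unfolding fV_iso_def
proof (intro exI[of _ id] exI[of _ "\<lambda>i. inv e"] conjI allI impI)
  show "bij_betw id {..<length [x]} {..<length [Comp T x e]}" by simp
next
  fix i assume "i < length [x]"
  then have i: "i = 0" by simp
  have he: "hom e (Dom T e) A" using iso_arr[OF assms(2)] assms(3) by auto
  have hi: "hom (inv e) A (Dom T e)" using inv_props(1)[OF assms(2)] assms(3) by simp
  show "is_iso_arr T (inv e)" using inv_iso[OF assms(2)] iso_def by auto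
  show "Dom T (inv e) = Dom T ([x] ! i)" using hi assms(1) i by (auto simp: hom_def)
  show "Cod T (inv e) = Dom T ([Comp T x e] ! id i)" using hi comp_hom[OF he assms(1)] i by (auto simp: hom_def)
  show "Comp T ([Comp T x e] ! id i) (inv e) = [x] ! i"
    using assoc[OF hi he assms(1)] inv_props(3)[OF assms(2)] assms i by simp
qed

definition rdata :: "'m \<Rightarrow> 'm list \<Rightarrow> 'm list \<Rightarrow> (nat \<times> 'm) list \<Rightarrow> bool" where
 "rdata g S P q \<longleftrightarrow>
   (\<forall>k<length P. fst (q!k) < length S \<and> hom (snd (q!k)) (Dom T (P!k)) (Dom T (S!fst(q!k))) \<and>
       Comp T (S!fst(q!k)) (snd(q!k)) = Comp T g (P!k)) \<and>
   (\<forall>A i x y. A \<in> Obj T \<and> i < length S \<and> hom x A (Dom T (S!i)) \<and> hom y A (Dom T g) \<and> Comp T (S!i) x = Comp T g y \<longrightarrow>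
       (\<exists>k c. k < length P \<and> hom c A (Dom T (P!k)) \<and> fst (q!k) = i \<and> Comp T (snd (q!k)) c = x \<and> Comp T (P!k) c = y)) \<and>
   (\<forall>A k c k' c'. k < length P \<and> k' < length P \<and> hom c A (Dom T (P!k)) \<and> hom c' A (Dom T (P!k')) \<and>
       fst(q!k) = fst(q!k') \<and> Comp T (snd (q!k)) c = Comp T (snd(q!k')) c' \<and> Comp T (P!k) c = Comp T (P!k') c' \<longrightarrow>
       k = k' \<and> c = c')"

lemma restriction_rdata:
  assumes g: "g \<in> Arr T" and S: "fVobj T (Cod T g) S" and P: "fVobj T (Dom T g) P"
    and r: "is_restriction T g S P"
  shows "\<exists>q. rdata g S P q"
proof -
  obtain q where pb: "is_pullback T (fund T S) [Dom T g] [Cod T g] (fstr S) [(0, g)] (fund T P) q (fstr P)"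
    using r unfolding is_restriction_def by auto
  have fm: "fmor T (fund T P) (fund T S) q" and eq: "fcomp T (fstr S) q = fcomp T [(0, g)] (fstr P)"
    and U: "\<And>Q q1 q2. fobj T Q \<Longrightarrow> fmor T Q (fund T S) q1 \<Longrightarrow> fmor T Q [Dom T g] q2 \<Longrightarrow>
        fcomp T (fstr S) q1 = fcomp T [(0, g)] q2 \<Longrightarrow>
        (\<exists>!u. fmor T Q (fund T P) u \<and> fcomp T q u = q1 \<and> fcomp T (fstr P) u = q2)"
    using pb unfolding is_pullback_def by blast+
  have lq: "length q = length P" using fm unfolding fmor_def by simp
  have cone: "fst (q!k) < length S \<and> hom (snd (q!k)) (Dom T (P!k)) (Dom T (S!fst(q!k))) \<and>
       Comp T (S!fst(q!k)) (snd(q!k)) = Comp T g (P!k)" if k: "k < length P" for k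
  proof -
    have a: "fst (q!k) < length S" "snd (q!k) \<in> Arr T" "Dom T (snd (q!k)) = Dom T (P!k)"
      "Cod T (snd (q!k)) = Dom T (S!fst(q!k))"
      using fm k unfolding fmor_def by auto
    have "fcomp T (fstr S) q ! k = fcomp T [(0, g)] (fstr P) ! k" using eq by simp
    then have "Comp T (S!fst(q!k)) (snd(q!k)) = Comp T g (P!k)"
      using k lq a by (simp add: fcomp_nth)
    then show ?thesis using a by (auto simp: hom_def)
  qed
  have ex: "\<exists>k c. k < length P \<and> hom c A (Dom T (P!k)) \<and> fst (q!k) = i \<and> Comp T (snd (q!k)) c = x \<and> Comp T (P!k) c = y"
    if A: "A \<in> Obj T" and i: "i < length S" and x: "hom x A (Dom T (S!i))" and y: "hom y A (Dom T g)"
      and e: "Comp T (S!i) x = Comp T g y" for A i x y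
  proof -
    have "\<exists>!u. fmor T [A] (fund T P) u \<and> fcomp T q u = [(i,x)] \<and> fcomp T (fstr P) u = [(0,y)]"
      by (rule U) (use A i x y e in \<open>auto simp: fobj_def fmor_def hom_def fcomp_single\<close>)
    then obtain u where u: "fmor T [A] (fund T P) u" "fcomp T q u = [(i,x)]" "fcomp T (fstr P) u = [(0,y)]" by blast
    obtain k c where uu: "u = [(k,c)]" using u(1) unfolding fmor_def
      by (metis One_nat_def length_0_conv length_Suc_conv surj_pair)
    have kc: "k < length P" "c \<in> Arr T" "Dom T c = A" "Cod T c = Dom T (P!k)"
      using u(1) unfolding uu fmor_def by auto
    show ?thesis using u(2,3) kc unfolding uu by (auto simp: fcomp_single hom_def)
  qed
  have un: "k = k' \<and> c = c'"
    if k: "k < length P" "k' < length P" and c: "hom c A (Dom T (P!k))" "hom c' A (Dom T (P!k'))"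
      and e: "fst(q!k) = fst(q!k')" "Comp T (snd (q!k)) c = Comp T (snd(q!k')) c'" "Comp T (P!k) c = Comp T (P!k') c'"
    for A k c k' c'
  proof -
    let ?i = "fst (q!k)" and ?x = "Comp T (snd (q!k)) c" and ?y = "Comp T (P!k) c"
    have A: "A \<in> Obj T" using c hom_obj by auto
    have ck: "hom (snd (q!k)) (Dom T (P!k)) (Dom T (S!?i))" "?i < length S"
      "Comp T (S!?i) (snd(q!k)) = Comp T g (P!k)" using cone k by auto
    have hP: "hom (P!k) (Dom T (P!k)) (Dom T g)" using fVobjD[OF P k(1)] .
    have hS: "hom (S!?i) (Dom T (S!?i)) (Cod T g)" using fVobjD[OF S ck(2)] .
    have hg: "hom g (Dom T g) (Cod T g)" using g by auto
    have x: "hom ?x A (Dom T (S!?i))" using c ck by auto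
    have y: "hom ?y A (Dom T g)" using c hP by auto
    have eqn: "Comp T (S!?i) ?x = Comp T g ?y"
      using assoc[OF c(1) ck(1) hS] assoc[OF c(1) hP hg] ck(3) by simp
    have "\<exists>!u. fmor T [A] (fund T P) u \<and> fcomp T q u = [(?i,?x)] \<and> fcomp T (fstr P) u = [(0,?y)]"
      by (rule U) (use A ck x y eqn in \<open>auto simp: fobj_def fmor_def hom_def fcomp_single\<close>)
    moreover have "fmor T [A] (fund T P) [(k,c)] \<and> fcomp T q [(k,c)] = [(?i,?x)] \<and> fcomp T (fstr P) [(k,c)] = [(0,?y)]"
      using k c by (auto simp: fmor_def hom_def fcomp_single)
    moreover have "fmor T [A] (fund T P) [(k',c')] \<and> fcomp T q [(k',c')] = [(?i,?x)] \<and> fcomp T (fstr P) [(k',c')] = [(0,?y)]"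
      using k c e by (auto simp: fmor_def hom_def fcomp_single)
    ultimately have "[(k,c)] = [(k',c')]" by blast
    then show ?thesis by simp
  qed
  show ?thesis unfolding rdata_def
    apply (rule exI[of _ q])
    using cone ex un by blast
qed

lemma exists_restriction:
  assumes orb: "orbital T" and g: "g \<in> Arr T" and S: "fVobj T (Cod T g) S"
  shows "\<exists>P. fVobj T (Dom T g) P \<and> is_restriction T g S P"
proof -
  have dg: "Dom T g \<in> Obj T" "Cod T g \<in> Obj T" using arr_obj g by auto
  have Sn: "\<forall>i<length S. S!i \<in> Arr T \<and> Cod T (S!i) = Cod T g \<and> Dom T (S!i) \<in> Obj T"
    using S arr_obj unfolding fVobj_def by (auto simp: nth_mem)
  have "\<exists>P0 p1 p2. is_pullback T (fund T S) [Dom T g] [Cod T g] (fstr S) [(0, g)] P0 p1 p2"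
    apply (rule orb[unfolded orbital_def, rule_format, of "fund T S" "[Dom T g]" "[Cod T g]" "fstr S" "[(0,g)]"])
    using Sn dg g by (auto simp: fobj_def fmor_def fund_def in_set_conv_nth)
  then obtain P0 p1 p2 where pb: "is_pullback T (fund T S) [Dom T g] [Cod T g] (fstr S) [(0, g)] P0 p1 p2" by blast
  have fm: "fmor T P0 [Dom T g] p2" using pb unfolding is_pullback_def by auto
  define P where "P = map snd p2"
  have l: "length p2 = length P0" using fm unfolding fmor_def by auto
  have e1: "fund T P = P0"
    by (rule nth_equalityI) (use fm l in \<open>auto simp: P_def fund_def fmor_def\<close>)
  have e2: "fstr P = p2"
    by (rule nth_equalityI) (use fm l in \<open>auto simp: P_def fstr_def fmor_def prod_eq_iff\<close>)
  have p2n: "\<forall>i<length p2. snd (p2!i) \<in> Arr T \<and> Cod T (snd (p2!i)) = Dom T g"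
    using fm l unfolding fmor_def by auto
  have "\<forall>s\<in>set P. s \<in> Arr T \<and> Cod T s = Dom T g"
  proof
    fix s assume "s \<in> set P"
    then obtain i where "i < length p2" "s = snd (p2!i)" unfolding P_def by (auto simp: in_set_conv_nth)
    then show "s \<in> Arr T \<and> Cod T s = Dom T g" using p2n by auto
  qed
  then have "fVobj T (Dom T g) P" using dg unfolding fVobj_def by auto
  moreover have "is_restriction T g S P" unfolding is_restriction_def e1 e2 using pb by blast
  ultimately show ?thesis by blast
qed

end


definition pos :: "nat list \<Rightarrow> nat \<Rightarrow> nat \<Rightarrow> nat" where
  "pos ls i l = sum_list (take i ls) + l"

lemma concat_nth_pos:
  "i < length xss \<Longrightarrow> l < length (xss!i) \<Longrightarrow> concat xss ! pos (map length xss) i l = xss!i!l"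
proof (induction xss arbitrary: i)
  case Nil then show ?case by simp
next
  case (Cons xs xss)
  show ?case
  proof (cases i)
    case 0 then show ?thesis using Cons by (simp add: pos_def nth_append)
  next
    case (Suc j)
    have "concat (xs # xss) ! pos (map length (xs # xss)) i l = concat xss ! pos (map length xss) j l"
      using Suc by (simp add: pos_def nth_append)
    then show ?thesis using Cons Suc by simp
  qed
qed

lemma pos_bound: "i < length ls \<Longrightarrow> l < ls!i \<Longrightarrow> pos ls i l < sum_list ls"
proof (induction ls arbitrary: i)
  case Nil then show ?case by simp
next
  case (Cons a ls)
  then show ?case by (cases i) (auto simp: pos_def)
qed

lemma pos_surj: "n < sum_list ls \<Longrightarrow> \<exists>i l. i < length ls \<and> l < ls!i \<and> n = pos ls i l"
proof (induction ls arbitrary: n)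
  case Nil then show ?case by simp
next
  case (Cons a ls)
  show ?case
  proof (cases "n < a")
    case True then show ?thesis by (intro exI[of _ 0] exI[of _ n]) (auto simp: pos_def)
  next
    case False
    have "n - a < sum_list ls" using Cons.prems False by simp
    then obtain i l where "i < length ls" "l < ls!i" "n - a = pos ls i l" using Cons.IH by blast
    then show ?thesis using False by (intro exI[of _ "Suc i"] exI[of _ l]) (auto simp: pos_def)
  qed
qed

lemma pos_inj: "i < length ls \<Longrightarrow> l < ls!i \<Longrightarrow> i' < length ls \<Longrightarrow> l' < ls!i' \<Longrightarrow>
   pos ls i l = pos ls i' l' \<Longrightarrow> i = i' \<and> l = l'"
proof (induction ls arbitrary: i i')
  case Nil then show ?case by simp
next
  case (Cons a ls)
  show ?case
  proof (cases i)
    case 0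
    then show ?thesis using Cons by (cases i') (auto simp: pos_def)
  next
    case (Suc j)
    then show ?thesis using Cons
      by (cases i') (auto simp: pos_def)
  qed
qed

lemma fcoprod_conv: "length Ts = length S \<Longrightarrow>
   fcoprod C S Ts = concat (map (\<lambda>i. map (Comp C (S!i)) (Ts!i)) [0..<length S])"
  unfolding fcoprod_def find_def
  by (rule arg_cong[where f=concat], rule nth_equalityI) auto

lemma fcoprod_len: "length Ts = length S \<Longrightarrow> length (fcoprod C S Ts) = sum_list (map length Ts)"
proof -
  assume a: "length Ts = length S"
  have "map length (map (\<lambda>i. map (Comp C (S!i)) (Ts!i)) [0..<length S]) = map length Ts"
    by (rule nth_equalityI) (use a in auto)
  then show ?thesis unfolding fcoprod_conv[OF a] length_concat by (simp add: comp_def)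
qed

lemma fcoprod_nth: "length Ts = length S \<Longrightarrow> i < length S \<Longrightarrow> l < length (Ts!i) \<Longrightarrow>
   fcoprod C S Ts ! pos (map length Ts) i l = Comp C (S!i) (Ts!i!l)"
proof -
  assume a: "length Ts = length S" "i < length S" "l < length (Ts!i)"
  have "map length (map (\<lambda>i. map (Comp C (S!i)) (Ts!i)) [0..<length S]) = map length Ts"
    by (rule nth_equalityI) (use a in auto)
  then show ?thesis unfolding fcoprod_conv[OF a(1)]
    using concat_nth_pos[of i "map (\<lambda>i. map (Comp C (S!i)) (Ts!i)) [0..<length S]" l] a by simp
qed

lemma fcoprod_set: "length Ts = length S \<Longrightarrow> s \<in> set (fcoprod C S Ts) \<Longrightarrow>
   \<exists>i<length S. \<exists>t\<in>set (Ts!i). s = Comp C (S!i) t"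
  unfolding fcoprod_conv by auto

lemma fcoprod_rep: "fcoprod C (replicate n a) (map (\<lambda>x. [x]) xs) = map (Comp C a) xs" if "length xs = n"
  using that by (induction xs arbitrary: n) (auto simp: fcoprod_def find_def)

lemma fcoprod_two: "fcoprod C [a, b] [X, Y] = map (Comp C a) X @ map (Comp C b) Y"
  by (simp add: fcoprod_def find_def)

lemma fcoprod_single: "fcoprod C [a] [X] = map (Comp C a) X"
  by (simp add: fcoprod_def find_def)

lemma concat_select2:
  assumes "k < k'" "k' < n"
  shows "concat (map (\<lambda>i. if i = k then [f i] else if i = k' then [f i] else []) [0..<n]) = [f k, f k']"
proof -
  have "[0..<n] = [0..<k] @ [k] @ [Suc k..<k'] @ [k'] @ [Suc k'..<n]"
  proof -
    have "[0..<n] = [0..<k'] @ [k'..<n]" using assms upt_add_eq_append[of 0 k' "n - k'"] by simp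
    also have "[k'..<n] = k' # [Suc k'..<n]" using assms upt_conv_Cons by simp
    also have "[0..<k'] = [0..<k] @ [k..<k']" using assms upt_add_eq_append[of 0 k "k' - k"] by simp
    also have "[k..<k'] = k # [Suc k..<k']" using assms upt_conv_Cons by simp
    finally show ?thesis by simp
  qed
  moreover have e1: "concat (map (\<lambda>i. if i = k then [f i] else if i = k' then [f i] else []) [0..<k]) = []"
    using assms by (auto simp: concat_eq_Nil_conv)
  moreover have e2: "concat (map (\<lambda>i. if i = k then [f i] else if i = k' then [f i] else []) [Suc k..<k']) = []"
    using assms by (auto simp: concat_eq_Nil_conv)
  moreover have e3: "concat (map (\<lambda>i. if i = k then [f i] else if i = k' then [f i] else []) [Suc k'..<n]) = []"
    using assms by (auto simp: concat_eq_Nil_conv)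
  ultimately show ?thesis using assms
    by (simp only: map_append concat_append list.map concat.simps append.simps) simp
qed

lemma fcoprod_select2:
  assumes "k < k'" "k' < length S"
  shows "fcoprod C S (map (\<lambda>i. if i = k then [a] else if i = k' then [b] else []) [0..<length S])
     = [Comp C (S!k) a, Comp C (S!k') b]"
proof -
  have "fcoprod C S (map (\<lambda>i. if i = k then [a] else if i = k' then [b] else []) [0..<length S])
     = concat (map (\<lambda>i. if i = k then [Comp C (S!i) a] else if i = k' then [Comp C (S!i) b] else []) [0..<length S])"
    by (subst fcoprod_conv) (auto intro!: arg_cong[where f=concat])
  also have "\<dots> = [Comp C (S!k) a, Comp C (S!k') b]"
  proof -
    have "(\<lambda>i. if i = k then [Comp C (S!i) a] else if i = k' then [Comp C (S!i) b] else [])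
      = (\<lambda>i. if i = k then [(\<lambda>i. if i = k then Comp C (S!i) a else Comp C (S!i) b) i]
             else if i = k' then [(\<lambda>i. if i = k then Comp C (S!i) a else Comp C (S!i) b) i] else [])"
      by auto
    then show ?thesis
      using concat_select2[OF assms, of "\<lambda>i. if i = k then Comp C (S!i) a else Comp C (S!i) b"] assms
      by simp
  qed
  finally show ?thesis .
qed



locale atcat = tcat +
  assumes atom: "atomic T" and orb: "orbital T"
begin

lemma atomicD: "hom f A B \<Longrightarrow> hom s B A \<Longrightarrow> Comp T f s = Idt T B \<Longrightarrow> iso f"
  using atom unfolding atomic_def iso_def hom_def by metis

lemma rdata_iso:
  assumes g: "g \<in> Arr T" and S: "fVobj T (Cod T g) S" and Si: "\<forall>s\<in>set S. iso s"
    and P: "fVobj T (Dom T g) P" and rd: "rdata g S P q"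
  shows "(\<forall>p\<in>set P. iso p) \<and> length P = length S"
proof -
  have cone: "\<And>k. k<length P \<Longrightarrow> fst (q!k) < length S \<and> hom (snd (q!k)) (Dom T (P!k)) (Dom T (S!fst(q!k))) \<and>
       Comp T (S!fst(q!k)) (snd(q!k)) = Comp T g (P!k)"
    and ex: "\<And>A i x y. A \<in> Obj T \<Longrightarrow> i < length S \<Longrightarrow> hom x A (Dom T (S!i)) \<Longrightarrow> hom y A (Dom T g) \<Longrightarrow>
        Comp T (S!i) x = Comp T g y \<Longrightarrow>
       (\<exists>k c. k < length P \<and> hom c A (Dom T (P!k)) \<and> fst (q!k) = i \<and> Comp T (snd (q!k)) c = x \<and> Comp T (P!k) c = y)"
    and un: "\<And>A k c k' c'. k < length P \<Longrightarrow> k' < length P \<Longrightarrow> hom c A (Dom T (P!k)) \<Longrightarrow> hom c' A (Dom T (P!k')) \<Longrightarrow>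
       fst(q!k) = fst(q!k') \<Longrightarrow> Comp T (snd (q!k)) c = Comp T (snd(q!k')) c' \<Longrightarrow> Comp T (P!k) c = Comp T (P!k') c' \<Longrightarrow>
       k = k' \<and> c = c'"
    using rd unfolding rdata_def by blast+
  have hg: "hom g (Dom T g) (Cod T g)" using g by auto
  have Dg: "Dom T g \<in> Obj T" using arr_obj g by auto
  have sec: "\<exists>k c. k < length P \<and> hom c (Dom T g) (Dom T (P!k)) \<and> fst (q!k) = i \<and>
      Comp T (snd (q!k)) c = Comp T (inv (S!i)) g \<and> Comp T (P!k) c = Idt T (Dom T g)"
    if i: "i < length S" for i
  proof -
    have hS: "hom (S!i) (Dom T (S!i)) (Cod T g)" using fVobjD[OF S i] .
    have iS: "iso (S!i)" using Si i by auto
    have hi: "hom (inv (S!i)) (Cod T g) (Dom T (S!i))" using inv_props(1)[OF iS] hS by (auto simp: hom_def)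
    have x: "hom (Comp T (inv (S!i)) g) (Dom T g) (Dom T (S!i))" using hi hg by auto
    have "Comp T (S!i) (Comp T (inv (S!i)) g) = g"
      using assoc[OF hg hi hS] inv_props(3)[OF iS] hS hg by (auto simp: hom_def)
    moreover have "Comp T g (Idt T (Dom T g)) = g" using hg by simp
    ultimately show ?thesis using ex[OF Dg i x id_hom[OF Dg]] by simp
  qed
  have key: "k' = k \<and> Comp T c (P!k) = Idt T (Dom T (P!k))"
    if k: "k < length P" and k': "k' < length P" and c: "hom c (Dom T g) (Dom T (P!k'))"
      and e1: "fst (q!k') = fst (q!k)" and e2: "Comp T (snd (q!k')) c = Comp T (inv (S!fst (q!k))) g"
      and e3: "Comp T (P!k') c = Idt T (Dom T g)" for k k' c
  proof -
    let ?i = "fst (q!k)" and ?r = "snd (q!k)"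
    have ck: "?i < length S" "hom ?r (Dom T (P!k)) (Dom T (S!?i))" "Comp T (S!?i) ?r = Comp T g (P!k)"
      using cone[OF k] by auto
    have ck': "hom (snd (q!k')) (Dom T (P!k')) (Dom T (S!?i))" using cone[OF k'] e1 by auto
    have hS: "hom (S!?i) (Dom T (S!?i)) (Cod T g)" using fVobjD[OF S ck(1)] .
    have iS: "iso (S!?i)" using Si ck(1) by auto
    have hi: "hom (inv (S!?i)) (Cod T g) (Dom T (S!?i))" using inv_props(1)[OF iS] hS by (auto simp: hom_def)
    have hP: "hom (P!k) (Dom T (P!k)) (Dom T g)" using fVobjD[OF P k] .
    have hP': "hom (P!k') (Dom T (P!k')) (Dom T g)" using fVobjD[OF P k'] .
    have hcp: "hom (Comp T c (P!k)) (Dom T (P!k)) (Dom T (P!k'))" using c hP by auto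
    have DP: "Dom T (P!k) \<in> Obj T" using hP hom_obj by auto
    have a1: "Comp T ?r (Idt T (Dom T (P!k))) = ?r" using ck(2) by simp
    have "Comp T (snd (q!k')) (Comp T c (P!k)) = Comp T (Comp T (snd (q!k')) c) (P!k)"
      using assoc[OF hP c ck'] .
    also have "\<dots> = Comp T (inv (S!?i)) (Comp T g (P!k))"
      using e2 assoc[OF hP hg hi] by simp
    also have "\<dots> = Comp T (Comp T (inv (S!?i)) (S!?i)) ?r"
      using ck(3) assoc[OF ck(2) hS hi] by simp
    also have "\<dots> = ?r" using inv_props(2)[OF iS] hS ck(2) by (auto simp: hom_def)
    finally have a2: "Comp T (snd (q!k')) (Comp T c (P!k)) = ?r" .
    have a3: "Comp T (P!k') (Comp T c (P!k)) = P!k"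
      using assoc[OF hP c hP'] e3 hP by simp
    have "k = k' \<and> Idt T (Dom T (P!k)) = Comp T c (P!k)"
      by (rule un[OF k k' id_hom[OF DP] hcp]) (use e1 a1 a2 a3 hP in auto)
    then show ?thesis by metis
  qed
  have isoP: "iso (P!k)" if k: "k < length P" for k
  proof -
    obtain k' c where kc: "k' < length P" "hom c (Dom T g) (Dom T (P!k'))" "fst (q!k') = fst (q!k)"
      "Comp T (snd (q!k')) c = Comp T (inv (S!fst (q!k))) g" "Comp T (P!k') c = Idt T (Dom T g)"
      using sec[of "fst (q!k)"] cone[OF k] by blast
    have "k' = k" "Comp T c (P!k) = Idt T (Dom T (P!k))" using key[OF k kc] by auto
    then show ?thesis using isoI[of "P!k" "Dom T (P!k)" "Dom T g" c] fVobjD[OF P k] kc by auto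
  qed
  have inj: "inj_on (\<lambda>k. fst (q!k)) {..<length P}"
  proof (rule inj_onI)
    fix k1 k2 assume k1: "k1 \<in> {..<length P}" and k2: "k2 \<in> {..<length P}" and e: "fst (q!k1) = fst (q!k2)"
    obtain k' c where kc: "k' < length P" "hom c (Dom T g) (Dom T (P!k'))" "fst (q!k') = fst (q!k1)"
      "Comp T (snd (q!k')) c = Comp T (inv (S!fst (q!k1))) g" "Comp T (P!k') c = Idt T (Dom T g)"
      using sec[of "fst (q!k1)"] cone k1 by blast
    have "k' = k1" using key[of k1 k' c] k1 kc by auto
    moreover have "k' = k2" using key[of k2 k' c] k2 kc e by auto
    ultimately show "k1 = k2" by simp
  qed
  have img: "(\<lambda>k. fst (q!k)) ` {..<length P} = {..<length S}"
  proof
    show "(\<lambda>k. fst (q!k)) ` {..<length P} \<subseteq> {..<length S}" using cone by auto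
    show "{..<length S} \<subseteq> (\<lambda>k. fst (q!k)) ` {..<length P}"
    proof
      fix i assume "i \<in> {..<length S}"
      then obtain k c where "k < length P" "fst (q!k) = i" using sec by blast
      then show "i \<in> (\<lambda>k. fst (q!k)) ` {..<length P}" by force
    qed
  qed
  have "length P = length S"
    using card_image[OF inj] img by simp
  then show ?thesis using isoP by (auto simp: in_set_conv_nth)
qed

end


context tcat
begin

lemma C_obj: "wIndSys T C \<Longrightarrow> S \<in> C V \<Longrightarrow> V \<in> Obj T \<and> fVobj T V S"
  unfolding wIndSys_def full_tsubcat_def by blast

lemma C_iso: "wIndSys T C \<Longrightarrow> S \<in> C V \<Longrightarrow> fVobj T V S' \<Longrightarrow> fV_iso T S S' \<Longrightarrow> S' \<in> C V"
  using C_obj[of C S V] unfolding wIndSys_def full_tsubcat_def by blast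

lemma C_res: "wIndSys T C \<Longrightarrow> g \<in> Arr T \<Longrightarrow> S \<in> C (Cod T g) \<Longrightarrow> fVobj T (Dom T g) P \<Longrightarrow>
   is_restriction T g S P \<Longrightarrow> P \<in> C (Dom T g)"
  unfolding wIndSys_def full_tsubcat_def by blast

lemma C_cop: "wIndSys T C \<Longrightarrow> S \<in> C V \<Longrightarrow> length Ts = length S \<Longrightarrow> (\<And>i. i < length S \<Longrightarrow> Ts!i \<in> C (Dom T (S!i)))
   \<Longrightarrow> fcoprod T S Ts \<in> C V"
  using C_obj[of C S V] unfolding wIndSys_def by blast

lemma C_id: "wIndSys T C \<Longrightarrow> S \<in> C V \<Longrightarrow> [Idt T V] \<in> C V"
  using C_obj[of C S V] unfolding wIndSys_def by blast

lemma U_w: "uni_wIndSys T C \<Longrightarrow> wIndSys T C" unfolding uni_wIndSys_def by blast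

lemma U_split: "uni_wIndSys T C \<Longrightarrow> S @ S' \<in> C V \<Longrightarrow> S \<in> C V \<and> S' \<in> C V"
  using C_obj[of C "S @ S'" V] unfolding uni_wIndSys_def by blast

lemma U_basic: "uni_wIndSys T C \<Longrightarrow> V \<in> Obj T \<Longrightarrow> [Idt T V] \<in> C V \<and> [] \<in> C V"
proof -
  assume u: "uni_wIndSys T C" and V: "V \<in> Obj T"
  then obtain S where "S \<in> C V" unfolding uni_wIndSys_def by blast
  then have "[Idt T V] \<in> C V" using C_id U_w u by blast
  moreover have "[] \<in> C V" using U_split[OF u, of "[]" "[Idt T V]"] calculation by simp
  ultimately show ?thesis by blast
qed

lemma U_single: "uni_wIndSys T C \<Longrightarrow> S \<in> C V \<Longrightarrow> k < length S \<Longrightarrow> [S!k] \<in> C V"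
proof -
  assume u: "uni_wIndSys T C" and S: "S \<in> C V" and k: "k < length S"
  have "S = take k S @ ([S!k] @ drop (Suc k) S)" using k by (simp add: id_take_nth_drop)
  then have "[S!k] @ drop (Suc k) S \<in> C V" using U_split[OF u] S by metis
  then show ?thesis using U_split[OF u] by blast
qed

lemma U_rep: assumes u: "uni_wIndSys T C" and V: "V \<in> Obj T" and two: "replicate 2 (Idt T V) \<in> C V"
  shows "replicate n (Idt T V) \<in> C V"
proof (induction n)
  case 0 then show ?case using U_basic[OF u V] by simp
next
  case (Suc n)
  have dV: "Dom T (Idt T V) = V" using id_hom[OF V] homD by auto
  have "fcoprod T (replicate 2 (Idt T V)) [replicate n (Idt T V), [Idt T V]] \<in> C V"
    by (rule C_cop[OF U_w[OF u] two]) (use Suc U_basic[OF u V] dV in \<open>auto simp: nth_Cons'\<close>)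
  moreover have "fcoprod T (replicate 2 (Idt T V)) [replicate n (Idt T V), [Idt T V]] = replicate (Suc n) (Idt T V)"
    using id_left[OF id_hom[OF V]] by (simp add: numeral_2_eq_2 fcoprod_two replicate_append_same[symmetric])
  ultimately show ?case by simp
qed

lemma U_isolist: assumes u: "uni_wIndSys T C" and S: "fVobj T V S" and Si: "\<forall>s\<in>set S. iso s"
  and c: "length S \<le> 1 \<or> replicate 2 (Idt T V) \<in> C V"
  shows "S \<in> C V"
proof -
  have V: "V \<in> Obj T" using S fVobj_V by auto
  have "replicate (length S) (Idt T V) \<in> C V"
  proof (cases "replicate 2 (Idt T V) \<in> C V")
    case True then show ?thesis using U_rep[OF u V] by blast
  next
    case False
    then have "S = [] \<or> length S = 1" using c by (cases S) auto
    then show ?thesis using U_basic[OF u V] by auto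
  qed
  then show ?thesis using C_iso[OF U_w[OF u] _ S fV_iso_rep2[OF S Si]] by blast
qed

end

definition LF :: "('o, 'm) cat \<Rightarrow> 'o set \<Rightarrow> ('o, 'm) tsubcat" where
  "LF T F = (\<lambda>V. F0 T V \<union> EFinf T F V)"

context atcat
begin

lemma LF_char: "S \<in> LF T F V \<longleftrightarrow> V \<in> Obj T \<and> fVobj T V S \<and> (\<forall>s\<in>set S. iso s) \<and> (length S \<le> 1 \<or> V \<in> F)"
proof (cases "V \<in> Obj T \<and> fVobj T V S")
  case True
  then have a: "fV_iso T S [] \<longleftrightarrow> length S = 0 \<and> (\<forall>s\<in>set S. iso s)"
     "fV_iso T S [Idt T V] \<longleftrightarrow> length S = 1 \<and> (\<forall>s\<in>set S. iso s)"
     "\<And>n. fV_iso T S (replicate n (Idt T V)) \<longleftrightarrow> length S = n \<and> (\<forall>s\<in>set S. iso s)"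
    using fV_iso_rep[of V S 0] fV_iso_rep[of V S 1] fV_iso_rep[of V S] by auto
  have b: "length S \<le> 1 \<longleftrightarrow> S = [] \<or> length S = 1" by (cases S) auto
  show ?thesis unfolding LF_def F0_def EFinf_def using True a b by auto
next
  case False
  then show ?thesis unfolding LF_def F0_def EFinf_def by auto
qed

theorem part1: assumes u: "uni_wIndSys T C" shows "is_family T (nabla_u T C)"
  unfolding is_family_def
proof (intro conjI ballI impI)
  show "nabla_u T C \<subseteq> Obj T" unfolding nabla_u_def by auto
next
  fix f assume f: "f \<in> Arr T" and c: "Cod T f \<in> nabla_u T C"
  let ?V = "Cod T f" and ?U = "Dom T f"
  have V: "?V \<in> Obj T" and U: "?U \<in> Obj T" using arr_obj f by auto
  have two: "replicate 2 (Idt T ?V) \<in> C ?V" using c unfolding nabla_u_def by auto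
  have S: "fVobj T ?V (replicate 2 (Idt T ?V))" using V id_hom[OF V] unfolding fVobj_def hom_def by auto
  obtain P where P: "fVobj T ?U P" "is_restriction T f (replicate 2 (Idt T ?V)) P"
    using exists_restriction[OF orb f S] by blast
  have PC: "P \<in> C ?U" using C_res[OF U_w[OF u] f two P] .
  obtain q where q: "rdata f (replicate 2 (Idt T ?V)) P q" using restriction_rdata[OF f S P(1,2)] by blast
  have "(\<forall>p\<in>set P. iso p) \<and> length P = 2"
    using rdata_iso[OF f S _ P(1) q] id_iso[OF V] by simp
  then have "fV_iso T P (replicate 2 (Idt T ?U))" using fV_iso_rep[OF P(1)] by simp
  then have "replicate 2 (Idt T ?U) \<in> C ?U"
    using C_iso[OF U_w[OF u] PC] id_hom[OF U] U unfolding fVobj_def hom_def by auto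
  then show "Dom T f \<in> nabla_u T C" unfolding nabla_u_def using U by auto
qed

lemma fVobj_append: "fVobj T V (S @ S') \<longleftrightarrow> fVobj T V S \<and> fVobj T V S' \<and> V \<in> Obj T"
  unfolding fVobj_def by auto

lemma fVobj_fcoprod: assumes S: "fVobj T V S" and l: "length Ts = length S"
  and Ts: "\<And>i. i < length S \<Longrightarrow> fVobj T (Dom T (S!i)) (Ts!i)"
  shows "fVobj T V (fcoprod T S Ts)"
  unfolding fVobj_def
proof (rule conjI, use S fVobj_V in blast, rule ballI)
  fix s assume "s \<in> set (fcoprod T S Ts)"
  then obtain i t where i: "i < length S" "t \<in> set (Ts!i)" "s = Comp T (S!i) t" using fcoprod_set[OF l] by blast
  have "hom t (Dom T t) (Dom T (S!i))" using Ts[OF i(1)] i(2) unfolding fVobj_def hom_def by auto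
  then have "hom s (Dom T t) V" using fVobjD[OF S i(1)] i(3) by auto
  then show "s \<in> Arr T \<and> Cod T s = V" by (auto simp: hom_def)
qed

theorem part2: assumes F: "is_family T F" shows "uni_wIndSys T (LF T F)"
proof -
  have fam: "\<And>f. f \<in> Arr T \<Longrightarrow> Cod T f \<in> F \<Longrightarrow> Dom T f \<in> F" using F unfolding is_family_def by blast
  have ft: "full_tsubcat T (LF T F)"
    unfolding full_tsubcat_def
  proof (intro conjI ballI allI impI)
    fix V assume "V \<notin> Obj T" then show "LF T F V = {}" unfolding LF_def F0_def EFinf_def by auto
  next
    fix V S assume "S \<in> LF T F V" then show "fVobj T V S" unfolding LF_char by auto
  next
    fix V S S' assume S: "S \<in> LF T F V" and S': "fVobj T V S' \<and> fV_iso T S S'"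
    have a: "V \<in> Obj T" "fVobj T V S" "\<forall>s\<in>set S. iso s" "length S \<le> 1 \<or> V \<in> F"
      using S unfolding LF_char by auto
    have "length S' = length S" using fV_iso_len[of S S'] S' by simp
    moreover have "\<forall>s\<in>set S'. iso s" using fV_iso_alliso[of V S' S] S' a by blast
    ultimately show "S' \<in> LF T F V" unfolding LF_char using a S' by auto
  next
    fix g S P assume g: "g \<in> Arr T" and S: "S \<in> LF T F (Cod T g)" and P: "fVobj T (Dom T g) P \<and> is_restriction T g S P"
    have S': "fVobj T (Cod T g) S" "\<forall>s\<in>set S. iso s" "length S \<le> 1 \<or> Cod T g \<in> F" using S unfolding LF_char by auto
    obtain q where q: "rdata g S P q" using restriction_rdata[OF g S'(1)] P by blast
    have "(\<forall>p\<in>set P. iso p) \<and> length P = length S" using rdata_iso[OF g S'(1,2)] P q by blast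
    then show "P \<in> LF T F (Dom T g)" unfolding LF_char using S'(3) fam[OF g] P arr_obj[OF g] by auto
  qed
  have w: "wIndSys T (LF T F)"
    unfolding wIndSys_def
  proof (intro conjI ballI allI impI ft)
    fix V assume V: "V \<in> Obj T"
    show "[Idt T V] \<in> LF T F V" unfolding LF_char using V id_iso[OF V] id_hom[OF V] unfolding fVobj_def hom_def by auto
  next
    fix V S Ts assume V: "V \<in> Obj T" and S: "S \<in> LF T F V"
      and Ts: "length Ts = length S \<and> (\<forall>i<length S. Ts ! i \<in> LF T F (Dom T (S ! i)))"
    have S': "fVobj T V S" "\<forall>s\<in>set S. iso s" "length S \<le> 1 \<or> V \<in> F" using S unfolding LF_char by auto
    have Ts': "fVobj T (Dom T (S!i)) (Ts!i) \<and> (\<forall>s\<in>set (Ts!i). iso s) \<and>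
       (length (Ts!i) \<le> 1 \<or> Dom T (S!i) \<in> F)" if i: "i < length S" for i
    proof -
      have "Ts!i \<in> LF T F (Dom T (S!i))" using Ts i by blast
      then show ?thesis unfolding LF_char by blast
    qed
    have ob: "fVobj T V (fcoprod T S Ts)" using fVobj_fcoprod[OF S'(1)] Ts Ts' by blast
    have io: "\<forall>s\<in>set (fcoprod T S Ts). iso s"
    proof
      fix s assume "s \<in> set (fcoprod T S Ts)"
      then obtain i t where i: "i < length S" "t \<in> set (Ts!i)" "s = Comp T (S!i) t"
        using fcoprod_set[of Ts S s T] Ts by blast
      have "Cod T t = Dom T (S!i)" using Ts' i unfolding fVobj_def by auto
      then show "iso s" using comp_iso[of t "S!i"] Ts' S'(2) i by auto
    qed
    have "length (fcoprod T S Ts) \<le> 1 \<or> V \<in> F"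
    proof (cases "V \<in> F")
      case False
      then have l: "length S \<le> 1" using S' by auto
      show ?thesis
      proof (cases "length S = 0")
        case True then show ?thesis using Ts by (simp add: fcoprod_def)
      next
        case False2: False
        then obtain s where s: "S = [s]" using l by (cases S) auto
        then obtain X where X: "Ts = [X]" using Ts by (cases Ts) auto
        have fc: "fcoprod T S Ts = map (Comp T s) X" using s X fcoprod_single by simp
        have si: "iso s" "hom s (Dom T s) V" using S' s fVobjD[OF S'(1), of 0] by auto
        show ?thesis
        proof (cases "length X \<le> 1")
          case True then show ?thesis using fc by simp
        next
          case False
          then have "Dom T s \<in> F" using Ts'[of 0] s X by auto
          moreover have "hom (inv s) V (Dom T s)" using inv_props(1)[OF si(1)] si(2) by (auto simp: hom_def)
          ultimately have "V \<in> F" using fam[of "inv s"] by (auto simp: hom_def)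
          then show ?thesis by simp
        qed
      qed
    qed simp
    then show "fcoprod T S Ts \<in> LF T F V" unfolding LF_char using ob io V by auto
  qed
  have n: "\<forall>V\<in>Obj T. LF T F V \<noteq> {}"
  proof
    fix V assume "V \<in> Obj T" then have "[] \<in> LF T F V" unfolding LF_char fVobj_def by auto
    then show "LF T F V \<noteq> {}" by auto
  qed
  have sp: "\<forall>V\<in>Obj T. \<forall>S S'. S @ S' \<in> LF T F V \<longrightarrow> S \<in> LF T F V \<and> S' \<in> LF T F V"
    unfolding LF_char fVobj_append by auto
  show ?thesis unfolding uni_wIndSys_def using w n sp by blast
qed

lemma LF_le: assumes u: "uni_wIndSys T C" and F: "F \<subseteq> nabla_u T C" shows "LF T F \<le> C"
proof (rule le_funI, rule subsetI)
  fix V S assume "S \<in> LF T F V"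
  then have S: "V \<in> Obj T" "fVobj T V S" "\<forall>s\<in>set S. iso s" "length S \<le> 1 \<or> V \<in> F" unfolding LF_char by auto
  have "length S \<le> 1 \<or> replicate 2 (Idt T V) \<in> C V" using S(4) F unfolding nabla_u_def by auto
  then show "S \<in> C V" using U_isolist[OF u S(2,3)] by blast
qed

lemma rep2_LF: "replicate 2 (Idt T V) \<in> LF T F V \<longleftrightarrow> V \<in> Obj T \<and> V \<in> F"
proof
  assume "replicate 2 (Idt T V) \<in> LF T F V" then show "V \<in> Obj T \<and> V \<in> F" unfolding LF_char by auto
next
  assume V: "V \<in> Obj T \<and> V \<in> F"
  have "fVobj T V (replicate 2 (Idt T V))" using V id_hom unfolding fVobj_def hom_def by auto
  moreover have "\<forall>s\<in>set (replicate 2 (Idt T V)). iso s" using V id_iso by auto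
  ultimately show "replicate 2 (Idt T V) \<in> LF T F V" unfolding LF_char using V by blast
qed

theorem part3: assumes F: "is_family T F" and u: "uni_wIndSys T C"
  shows "LF T F \<le> C \<longleftrightarrow> F \<subseteq> nabla_u T C"
proof
  assume le: "LF T F \<le> C"
  show "F \<subseteq> nabla_u T C"
  proof
    fix V assume VF: "V \<in> F"
    then have V: "V \<in> Obj T" using F unfolding is_family_def by auto
    then have "replicate 2 (Idt T V) \<in> LF T F V" using rep2_LF[of V F] VF by blast
    then have "replicate 2 (Idt T V) \<in> C V" using le by (auto simp: le_fun_def)
    then show "V \<in> nabla_u T C" unfolding nabla_u_def using V by auto
  qed
next
  assume "F \<subseteq> nabla_u T C" then show "LF T F \<le> C" using LF_le[OF u] by blast
qed

lemma nabla_LF: "is_family T F \<Longrightarrow> nabla_u T (LF T F) = F"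
proof -
  assume F: "is_family T F"
  have "V \<in> nabla_u T (LF T F) \<longleftrightarrow> V \<in> F" for V
    unfolding nabla_u_def using rep2_LF[of V F] F unfolding is_family_def by blast
  then show ?thesis by blast
qed

theorem part4: assumes F: "is_family T F" and F': "is_family T F'"
  shows "LF T F \<le> LF T F' \<longleftrightarrow> F \<subseteq> F'"
  using part3[OF F part2[OF F']] nabla_LF[OF F'] by simp

end


context tcat
begin

definition lift :: "'m list \<Rightarrow> 'm \<Rightarrow> nat \<Rightarrow> 'm \<Rightarrow> bool" where
  "lift S g i x \<longleftrightarrow> i < length S \<and> hom x (Dom T g) (Dom T (S!i)) \<and> Comp T (S!i) x = g"

definition good :: "'o set \<Rightarrow> 'm list \<Rightarrow> bool" where
  "good F S \<longleftrightarrow> (\<forall>g i x j y. g \<in> Arr T \<and> lift S g i x \<and> lift S g j y \<and> (i,x) \<noteq> (j,y) \<longrightarrow> Dom T g \<in> F)"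

definition RR :: "'o set \<Rightarrow> ('o, 'm) tsubcat" where
  "RR F = (\<lambda>V. if V \<in> Obj T then {S. fVobj T V S \<and> good F S} else {})"

lemma goodD: "good F S \<Longrightarrow> g \<in> Arr T \<Longrightarrow> lift S g i x \<Longrightarrow> lift S g j y \<Longrightarrow> (i,x) \<noteq> (j,y) \<Longrightarrow> Dom T g \<in> F"
  unfolding good_def by blast

lemma RR_mem: "S \<in> RR F V \<longleftrightarrow> V \<in> Obj T \<and> fVobj T V S \<and> good F S"
  unfolding RR_def by auto

lemma good_iso:
  assumes S: "fVobj T V S" and S': "fVobj T V S'" and iso: "fV_iso T S S'" and G: "good F S"
  shows "good F S'"
  unfolding good_def
proof (intro allI impI)
  fix g i' x' j' y' assume a: "g \<in> Arr T \<and> lift S' g i' x' \<and> lift S' g j' y' \<and> (i', x') \<noteq> (j', y')"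
  obtain \<sigma> \<phi> where b: "bij_betw \<sigma> {..<length S} {..<length S'}" and
    c: "\<forall>i<length S. is_iso_arr T (\<phi> i) \<and> Dom T (\<phi> i) = Dom T (S!i) \<and>
        Cod T (\<phi> i) = Dom T (S'!(\<sigma> i)) \<and> Comp T (S'!(\<sigma> i)) (\<phi> i) = S!i"
    using iso unfolding fV_iso_def by auto
  have tr: "\<exists>i. i < length S \<and> \<sigma> i = i' \<and> lift S g i (Comp T (inv (\<phi> i)) x')" if l: "lift S' g i' x'" for i' x'
  proof -
    have "i' \<in> \<sigma> ` {..<length S}" using b l unfolding bij_betw_def lift_def by auto
    then obtain i where i: "i < length S" "\<sigma> i = i'" by auto
    have ip: "iso (\<phi> i)" using c i iso_def by auto
    have hp: "hom (\<phi> i) (Dom T (S!i)) (Dom T (S'!i'))" using c i iso_arr[OF ip] by (auto simp: hom_def)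
    have hi: "hom (inv (\<phi> i)) (Dom T (S'!i')) (Dom T (S!i))" using inv_props(1)[OF ip] hp by (auto simp: hom_def)
    have hx: "hom x' (Dom T g) (Dom T (S'!i'))" and e: "Comp T (S'!i') x' = g" and i'l: "i' < length S'"
      using l unfolding lift_def by auto
    have hs': "hom (S'!i') (Dom T (S'!i')) V" using fVobjD[OF S' i'l] .
    have "Comp T (S!i) (Comp T (inv (\<phi> i)) x') = Comp T (Comp T (S!i) (inv (\<phi> i))) x'"
      using assoc[OF hx hi] fVobjD[OF S i(1)] by blast
    also have "Comp T (S!i) (inv (\<phi> i)) = Comp T (Comp T (S'!i') (\<phi> i)) (inv (\<phi> i))" using c i by auto
    also have "\<dots> = Comp T (S'!i') (Comp T (\<phi> i) (inv (\<phi> i)))" using assoc[OF hi hp hs'] by simp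
    also have "\<dots> = S'!i'" using inv_props(3)[OF ip] hp hs' by (auto simp: hom_def)
    finally have "Comp T (S!i) (Comp T (inv (\<phi> i)) x') = g" using e by simp
    then show ?thesis unfolding lift_def using i hi hx by auto
  qed
  obtain i where i: "i < length S" "\<sigma> i = i'" "lift S g i (Comp T (inv (\<phi> i)) x')" using tr a by blast
  obtain j where j: "j < length S" "\<sigma> j = j'" "lift S g j (Comp T (inv (\<phi> j)) y')" using tr a by blast
  have "(i, Comp T (inv (\<phi> i)) x') \<noteq> (j, Comp T (inv (\<phi> j)) y')"
  proof
    assume e: "(i, Comp T (inv (\<phi> i)) x') = (j, Comp T (inv (\<phi> j)) y')"
    then have ij: "i = j" by simp
    have ip: "iso (\<phi> i)" using c i iso_def by auto
    have ii: "iso (inv (\<phi> i))" using inv_iso[OF ip] .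
    have d: "Dom T (inv (\<phi> i)) = Dom T (S'!i')" using inv_props(1)[OF ip] c i by (auto simp: hom_def)
    have "x' = y'"
      by (rule iso_cancel_left[OF ii, of x' "Dom T g"]) (use a e ij i j d in \<open>auto simp: lift_def\<close>)
    then show False using a i j ij by auto
  qed
  then show "Dom T g \<in> F" using goodD[OF G] a i j by blast
qed

lemma lift_append1: "lift S g i x \<Longrightarrow> lift (S @ S') g i x"
  unfolding lift_def by (auto simp: nth_append)

lemma lift_append2: "lift S' g i x \<Longrightarrow> lift (S @ S') g (length S + i) x"
  unfolding lift_def by (auto simp: nth_append)

end

context atcat
begin

lemma RR_uni: assumes F: "is_family T F" shows "uni_wIndSys T (RR F)"
proof -
  have fam: "\<And>f. f \<in> Arr T \<Longrightarrow> Cod T f \<in> F \<Longrightarrow> Dom T f \<in> F" using F unfolding is_family_def by blast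
  have ft: "full_tsubcat T (RR F)"
    unfolding full_tsubcat_def
  proof (intro conjI)
    show "\<forall>V. V \<notin> Obj T \<longrightarrow> RR F V = {}" unfolding RR_def by auto
    show "\<forall>V\<in>Obj T. \<forall>S\<in>RR F V. fVobj T V S" unfolding RR_def by auto
    show "\<forall>V\<in>Obj T. \<forall>S\<in>RR F V. \<forall>S'. fVobj T V S' \<and> fV_iso T S S' \<longrightarrow> S' \<in> RR F V"
    proof (intro ballI allI impI)
      fix V S S' assume "V \<in> Obj T" "S \<in> RR F V" "fVobj T V S' \<and> fV_iso T S S'"
      then show "S' \<in> RR F V" unfolding RR_mem using good_iso[of V S S' F] by blast
    qed
    show "\<forall>g\<in>Arr T. \<forall>S\<in>RR F (Cod T g). \<forall>P. fVobj T (Dom T g) P \<and> is_restriction T g S P \<longrightarrow> P \<in> RR F (Dom T g)"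
    proof (intro ballI allI impI)
      fix h S P assume h: "h \<in> Arr T" and S: "S \<in> RR F (Cod T h)" and P: "fVobj T (Dom T h) P \<and> is_restriction T h S P"
      have S': "fVobj T (Cod T h) S" "good F S" using S unfolding RR_mem by auto
      obtain q where q: "rdata h S P q" using restriction_rdata[OF h S'(1)] P by blast
      have cone: "\<And>k. k<length P \<Longrightarrow> fst (q!k) < length S \<and> hom (snd (q!k)) (Dom T (P!k)) (Dom T (S!fst(q!k))) \<and>
         Comp T (S!fst(q!k)) (snd(q!k)) = Comp T h (P!k)"
        and un: "\<And>A k c k' c'. k < length P \<Longrightarrow> k' < length P \<Longrightarrow> hom c A (Dom T (P!k)) \<Longrightarrow> hom c' A (Dom T (P!k')) \<Longrightarrow>
         fst(q!k) = fst(q!k') \<Longrightarrow> Comp T (snd (q!k)) c = Comp T (snd(q!k')) c' \<Longrightarrow> Comp T (P!k) c = Comp T (P!k') c' \<Longrightarrow>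
         k = k' \<and> c = c'"
        using q unfolding rdata_def by blast+
      have hh: "hom h (Dom T h) (Cod T h)" using h by auto
      have "good F P" unfolding good_def
      proof (intro allI impI)
        fix g k c k' c' assume a: "g \<in> Arr T \<and> lift P g k c \<and> lift P g k' c' \<and> (k, c) \<noteq> (k', c')"
        have l1: "k < length P" "hom c (Dom T g) (Dom T (P!k))" "Comp T (P!k) c = g"
          and l2: "k' < length P" "hom c' (Dom T g) (Dom T (P!k'))" "Comp T (P!k') c' = g"
          using a unfolding lift_def by auto
        have hP: "hom (P!k) (Dom T (P!k)) (Dom T h)" using fVobjD P l1 by blast
        have hP': "hom (P!k') (Dom T (P!k')) (Dom T h)" using fVobjD P l2 by blast
        have hg: "hom g (Dom T g) (Dom T h)" using l1 hP by auto
        have hhg: "h \<in> Arr T" "Comp T h g \<in> Arr T" "Dom T (Comp T h g) = Dom T g" using comp_hom[OF hg hh] h by (auto simp: hom_def)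
        have lf: "lift S (Comp T h g) (fst (q!k)) (Comp T (snd (q!k)) c)" if k: "k < length P"
          and c: "hom c (Dom T g) (Dom T (P!k))" and e: "Comp T (P!k) c = g" for k c
        proof -
          have ck: "fst (q!k) < length S" "hom (snd (q!k)) (Dom T (P!k)) (Dom T (S!fst(q!k)))"
            "Comp T (S!fst(q!k)) (snd(q!k)) = Comp T h (P!k)" using cone[OF k] by auto
          have hS: "hom (S!fst(q!k)) (Dom T (S!fst(q!k))) (Cod T h)" using fVobjD[OF S'(1) ck(1)] .
          have hPk: "hom (P!k) (Dom T (P!k)) (Dom T h)" using fVobjD P k by blast
          have "Comp T (S!fst(q!k)) (Comp T (snd (q!k)) c) = Comp T (Comp T h (P!k)) c"
            using assoc[OF c ck(2) hS] ck(3) by simp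
          also have "\<dots> = Comp T h g" using assoc[OF c hPk hh] e by simp
          finally show ?thesis unfolding lift_def using ck c hhg by auto
        qed
        have "(fst (q!k), Comp T (snd (q!k)) c) \<noteq> (fst (q!k'), Comp T (snd (q!k')) c')"
        proof
          assume e: "(fst (q!k), Comp T (snd (q!k)) c) = (fst (q!k'), Comp T (snd (q!k')) c')"
          have "k = k' \<and> c = c'" by (rule un[OF l1(1) l2(1) l1(2) l2(2)]) (use e l1 l2 in auto)
          then show False using a by auto
        qed
        then have "Dom T (Comp T h g) \<in> F"
          using goodD[OF S'(2) hhg(2) lf[OF l1] lf[OF l2]] by blast
        then show "Dom T g \<in> F" using hhg by simp
      qed
      then show "P \<in> RR F (Dom T h)" unfolding RR_mem using P arr_obj[OF h] by blast
    qed
  qed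
  have w: "wIndSys T (RR F)"
    unfolding wIndSys_def
  proof (intro conjI ft)
    show "\<forall>V\<in>Obj T. RR F V \<noteq> {} \<longrightarrow> [Idt T V] \<in> RR F V"
    proof (intro ballI impI)
      fix V assume V: "V \<in> Obj T"
      have "good F [Idt T V]" unfolding good_def
      proof (intro allI impI)
        fix g i x j y assume a: "g \<in> Arr T \<and> lift [Idt T V] g i x \<and> lift [Idt T V] g j y \<and> (i, x) \<noteq> (j, y)"
        have dV: "Dom T (Idt T V) = V" using id_hom[OF V] by (simp add: hom_def)
        have one: "x = g" if l: "lift [Idt T V] g i x" for i x
        proof -
          have i: "i = 0" using l unfolding lift_def by simp
          have hx: "hom x (Dom T g) V" and e: "Comp T (Idt T V) x = g" using l dV unfolding lift_def i by auto
          show "x = g" using id_left[OF hx] e by simp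
        qed
        have "i = 0" "j = 0" using a unfolding lift_def by auto
        then show "Dom T g \<in> F" using a one by blast
      qed
      moreover have "fVobj T V [Idt T V]" using V id_hom[OF V] unfolding fVobj_def hom_def by auto
      ultimately show "[Idt T V] \<in> RR F V" unfolding RR_mem using V by blast
    qed
    show "\<forall>V\<in>Obj T. \<forall>S\<in>RR F V. \<forall>Ts. length Ts = length S \<and> (\<forall>i<length S. Ts ! i \<in> RR F (Dom T (S ! i))) \<longrightarrow>
        fcoprod T S Ts \<in> RR F V"
    proof (intro ballI allI impI)
      fix V S Ts assume V: "V \<in> Obj T" and S: "S \<in> RR F V" and Ts: "length Ts = length S \<and> (\<forall>i<length S. Ts ! i \<in> RR F (Dom T (S ! i)))"
      have S': "fVobj T V S" "good F S" using S unfolding RR_mem by auto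
      have l: "length Ts = length S" using Ts by simp
      have Ts': "fVobj T (Dom T (S!i)) (Ts!i) \<and> good F (Ts!i)" if "i < length S" for i
      proof -
        have "Ts!i \<in> RR F (Dom T (S!i))" using Ts that by blast
        then show ?thesis unfolding RR_mem by blast
      qed
      have ob: "fVobj T V (fcoprod T S Ts)" using fVobj_fcoprod[OF S'(1) l] Ts' by blast
      let ?ls = "map length Ts"
      have dec: "\<exists>i l. i < length S \<and> l < length (Ts!i) \<and> n = pos ?ls i l \<and>
          lift S g i (Comp T (Ts!i!l) x) \<and> lift (Ts!i) (Comp T (Ts!i!l) x) l x \<and> Dom T (Comp T (Ts!i!l) x) = Dom T g
          \<and> Comp T (Ts!i!l) x \<in> Arr T"
        if lf: "lift (fcoprod T S Ts) g n x" for g n x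
      proof -
        have n: "n < sum_list ?ls" using lf fcoprod_len[OF l, of T] unfolding lift_def by simp
        then obtain i m where im: "i < length ?ls" "m < ?ls!i" "n = pos ?ls i m" using pos_surj by blast
        have i: "i < length S" "m < length (Ts!i)" using im l by auto
        have fn: "fcoprod T S Ts ! n = Comp T (S!i) (Ts!i!m)" using fcoprod_nth[OF l i] im by simp
        have ht: "hom (Ts!i!m) (Dom T (Ts!i!m)) (Dom T (S!i))" using fVobjD Ts' i by blast
        have hs: "hom (S!i) (Dom T (S!i)) V" using fVobjD[OF S'(1) i(1)] .
        have hst: "hom (Comp T (S!i) (Ts!i!m)) (Dom T (Ts!i!m)) V" using comp_hom[OF ht hs] .
        have hx: "hom x (Dom T g) (Dom T (Ts!i!m))" and e: "Comp T (Comp T (S!i) (Ts!i!m)) x = g"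
          using lf fn hst unfolding lift_def by (auto simp: hom_def)
        have htx: "hom (Comp T (Ts!i!m) x) (Dom T g) (Dom T (S!i))" using hx ht by auto
        have "Comp T (S!i) (Comp T (Ts!i!m) x) = g" using assoc[OF hx ht hs] e by simp
        then show ?thesis using i im htx hx
          by (intro exI[of _ i] exI[of _ m]) (auto simp: lift_def hom_def)
      qed
      have "good F (fcoprod T S Ts)" unfolding good_def
      proof (intro allI impI)
        fix g n1 x1 n2 x2 assume a: "g \<in> Arr T \<and> lift (fcoprod T S Ts) g n1 x1 \<and> lift (fcoprod T S Ts) g n2 x2 \<and> (n1, x1) \<noteq> (n2, x2)"
        obtain i1 l1 where d1: "i1 < length S" "l1 < length (Ts!i1)" "n1 = pos ?ls i1 l1"
          "lift S g i1 (Comp T (Ts!i1!l1) x1)" "lift (Ts!i1) (Comp T (Ts!i1!l1) x1) l1 x1"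
          "Dom T (Comp T (Ts!i1!l1) x1) = Dom T g" "Comp T (Ts!i1!l1) x1 \<in> Arr T"
          using dec[of g n1 x1] a by blast
        obtain i2 l2 where d2: "i2 < length S" "l2 < length (Ts!i2)" "n2 = pos ?ls i2 l2"
          "lift S g i2 (Comp T (Ts!i2!l2) x2)" "lift (Ts!i2) (Comp T (Ts!i2!l2) x2) l2 x2"
          "Dom T (Comp T (Ts!i2!l2) x2) = Dom T g" "Comp T (Ts!i2!l2) x2 \<in> Arr T"
          using dec[of g n2 x2] a by blast
        show "Dom T g \<in> F"
        proof (cases "(i1, Comp T (Ts!i1!l1) x1) = (i2, Comp T (Ts!i2!l2) x2)")
          case False
          show ?thesis using goodD[OF S'(2) conjunct1[OF a] d1(4) d2(4) False] by simp
        next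
          case True
          then have ii: "i1 = i2" and ee: "Comp T (Ts!i1!l1) x1 = Comp T (Ts!i2!l2) x2" by auto
          have "(l1, x1) \<noteq> (l2, x2)" using a d1(3) d2(3) ii by auto
          then have "Dom T (Comp T (Ts!i1!l1) x1) \<in> F"
            using goodD[OF conjunct2[OF Ts'[OF d1(1)]] d1(7) d1(5)] d2(5) ii ee by auto
          then show ?thesis using d1 by simp
        qed
      qed
      then show "fcoprod T S Ts \<in> RR F V" unfolding RR_mem using ob V by blast
    qed
  qed
  have n: "\<forall>V\<in>Obj T. RR F V \<noteq> {}"
  proof
    fix V assume "V \<in> Obj T" then have "[] \<in> RR F V" unfolding RR_mem good_def lift_def fVobj_def by auto
    then show "RR F V \<noteq> {}" by auto
  qed
  have sp: "\<forall>V\<in>Obj T. \<forall>S S'. S @ S' \<in> RR F V \<longrightarrow> S \<in> RR F V \<and> S' \<in> RR F V"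
  proof (intro ballI allI impI)
    fix V S S' assume "S @ S' \<in> RR F V"
    then have a: "V \<in> Obj T" "fVobj T V S" "fVobj T V S'" "good F (S @ S')" unfolding RR_mem fVobj_append by auto
    have "good F S" unfolding good_def
    proof (intro allI impI)
      fix g i x j y assume b: "g \<in> Arr T \<and> lift S g i x \<and> lift S g j y \<and> (i, x) \<noteq> (j, y)"
      then show "Dom T g \<in> F" using goodD[OF a(4) _ lift_append1[of S g i x S'] lift_append1[of S g j y S']] by blast
    qed
    moreover have "good F S'" unfolding good_def
    proof (intro allI impI)
      fix g i x j y assume b: "g \<in> Arr T \<and> lift S' g i x \<and> lift S' g j y \<and> (i, x) \<noteq> (j, y)"
      then have "(length S + i, x) \<noteq> (length S + j, y)" by auto
      then show "Dom T g \<in> F" using goodD[OF a(4) _ lift_append2[of S' g i x S] lift_append2[of S' g j y S]] b by blast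
    qed
    ultimately show "S \<in> RR F V \<and> S' \<in> RR F V" unfolding RR_mem using a by blast
  qed
  show ?thesis unfolding uni_wIndSys_def using w n sp by blast
qed

lemma nabla_RR: "nabla_u T (RR F) \<subseteq> F"
proof
  fix V assume "V \<in> nabla_u T (RR F)"
  then have V: "V \<in> Obj T" and g: "good F (replicate 2 (Idt T V))" unfolding nabla_u_def RR_mem by auto
  have h: "hom (Idt T V) V V" using id_hom[OF V] .
  have "lift (replicate 2 (Idt T V)) (Idt T V) 0 (Idt T V)" "lift (replicate 2 (Idt T V)) (Idt T V) 1 (Idt T V)"
    unfolding lift_def using h id_left[OF h] by (auto simp: hom_def)
  then have "Dom T (Idt T V) \<in> F" using goodD[OF g] h by (fastforce simp: hom_def)
  then show "V \<in> F" using h by (simp add: hom_def)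
qed

lemma mono_nabla: "C \<le> D \<Longrightarrow> nabla_u T C \<subseteq> nabla_u T D"
  unfolding nabla_u_def le_fun_def by auto

lemma RR_adj: assumes u: "uni_wIndSys T C" and F: "is_family T F"
  shows "nabla_u T C \<subseteq> F \<longleftrightarrow> C \<le> RR F"
proof
  assume "C \<le> RR F" then show "nabla_u T C \<subseteq> F" using mono_nabla nabla_RR by blast
next
  assume nF: "nabla_u T C \<subseteq> F"
  show "C \<le> RR F"
  proof (rule le_funI, rule subsetI)
    fix V S assume SC: "S \<in> C V"
    have VS: "V \<in> Obj T" "fVobj T V S" using C_obj[OF U_w[OF u] SC] by auto
    have "good F S" unfolding good_def
    proof (intro allI impI)
      fix g i x j y assume a: "g \<in> Arr T \<and> lift S g i x \<and> lift S g j y \<and> (i, x) \<noteq> (j, y)"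
      have g: "g \<in> Arr T" using a by blast
      let ?W = "Dom T g"
      have W: "?W \<in> Obj T" using arr_obj g by auto
      have li: "i < length S" "hom x ?W (Dom T (S!i))" "Comp T (S!i) x = g" using a unfolding lift_def by auto
      have lj: "j < length S" "hom y ?W (Dom T (S!j))" "Comp T (S!j) y = g" using a unfolding lift_def by auto
      have cg: "Cod T g = V" using li fVobjD[OF VS(2) li(1)] comp_hom[OF li(2)] by (metis hom_def)
      have Sg: "fVobj T (Cod T g) S" using VS cg by simp
      obtain P where P: "fVobj T ?W P" "is_restriction T g S P" using exists_restriction[OF orb g Sg] by blast
      have PC: "P \<in> C ?W" using C_res[OF U_w[OF u] g _ P] SC cg by simp
      obtain q where q: "rdata g S P q" using restriction_rdata[OF g Sg P] by blast
      have ex: "\<And>A i x y. A \<in> Obj T \<Longrightarrow> i < length S \<Longrightarrow> hom x A (Dom T (S!i)) \<Longrightarrow> hom y A (Dom T g) \<Longrightarrow>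
          Comp T (S!i) x = Comp T g y \<Longrightarrow>
         (\<exists>k c. k < length P \<and> hom c A (Dom T (P!k)) \<and> fst (q!k) = i \<and> Comp T (snd (q!k)) c = x \<and> Comp T (P!k) c = y)"
        using q unfolding rdata_def by blast
      have hg: "hom g ?W (Cod T g)" using g by auto
      have gid: "Comp T g (Idt T ?W) = g" using hg by simp
      obtain k c where kc: "k < length P" "hom c ?W (Dom T (P!k))" "fst (q!k) = i" "Comp T (snd (q!k)) c = x"
          "Comp T (P!k) c = Idt T ?W"
        using ex[OF W li(1) li(2) id_hom[OF W]] li(3) gid by auto
      obtain k' c' where kc': "k' < length P" "hom c' ?W (Dom T (P!k'))" "fst (q!k') = j" "Comp T (snd (q!k')) c' = y"
          "Comp T (P!k') c' = Idt T ?W"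
        using ex[OF W lj(1) lj(2) id_hom[OF W]] lj(3) gid by auto
      have hP: "hom (P!k) (Dom T (P!k)) ?W" using fVobjD[OF P(1) kc(1)] .
      have hP': "hom (P!k') (Dom T (P!k')) ?W" using fVobjD[OF P(1) kc'(1)] .
      have iP: "iso (P!k)" using atomicD[OF hP kc(2) kc(5)] .
      have iP': "iso (P!k')" using atomicD[OF hP' kc'(2) kc'(5)] .
      have kk: "k \<noteq> k'"
      proof
        assume e: "k = k'"
        have "c = inv (P!k)" using section_iso[OF iP] kc hP by (auto simp: hom_def)
        moreover have "c' = inv (P!k)" using section_iso[OF iP] kc' hP e by (auto simp: hom_def)
        ultimately show False using kc kc' e a by auto
      qed
      have sel: "[Idt T ?W, Idt T ?W] \<in> C ?W" if ab: "a < b" "b < length P" "iso (P!a)" "iso (P!b)" for a b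
      proof -
        let ?Ts = "map (\<lambda>i. if i = a then [inv (P!a)] else if i = b then [inv (P!b)] else []) [0..<length P]"
        have m: "[inv (P!t)] \<in> C (Dom T (P!t))" if t: "t < length P" "iso (P!t)" for t
        proof -
          have ht: "hom (P!t) (Dom T (P!t)) ?W" using fVobjD[OF P(1) t(1)] .
          have "fVobj T (Dom T (P!t)) [inv (P!t)]" using inv_props(1)[OF t(2)] ht hom_obj
            unfolding fVobj_def hom_def by auto
          then show ?thesis using U_isolist[OF u] inv_iso[OF t(2)] by auto
        qed
        have "fcoprod T P ?Ts \<in> C ?W"
        proof (rule C_cop[OF U_w[OF u] PC])
          show "length ?Ts = length P" by simp
          fix t assume t: "t < length P"
          have D: "Dom T (P!t) \<in> Obj T" using fVobjD[OF P(1) t] hom_obj by blast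
          show "?Ts ! t \<in> C (Dom T (P ! t))" using m ab t U_basic[OF u D] by auto
        qed
        moreover have "fcoprod T P ?Ts = [Comp T (P!a) (inv (P!a)), Comp T (P!b) (inv (P!b))]"
          using fcoprod_select2[OF ab(1,2), where C=T and a="inv (P!a)" and b="inv (P!b)"] by simp
        moreover have "Comp T (P!a) (inv (P!a)) = Idt T ?W" "Comp T (P!b) (inv (P!b)) = Idt T ?W"
          using inv_props(3)[OF ab(3)] inv_props(3)[OF ab(4)] fVobjD[OF P(1)] ab by (auto simp: hom_def)
        ultimately show ?thesis by simp
      qed
      have "[Idt T ?W, Idt T ?W] \<in> C ?W"
      proof (cases "k < k'")
        case True then show ?thesis using sel kc'(1) iP iP' by blast
      next
        case False then have "k' < k" using kk by simp
        then show ?thesis using sel kc(1) iP iP' by blast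
      qed
      then have "?W \<in> nabla_u T C" unfolding nabla_u_def using W by (simp add: numeral_2_eq_2)
      then show "?W \<in> F" using nF by blast
    qed
    then show "S \<in> RR F V" using RR_mem VS by auto
  qed
qed

lemma RR_ff: assumes F: "is_family T F" and F': "is_family T F'"
  shows "RR F \<le> RR F' \<longleftrightarrow> F \<subseteq> F'"
proof
  assume "F \<subseteq> F'"
  then have "good F' S" if gs: "good F S" for S unfolding good_def
  proof (intro allI impI)
    fix g i x j y assume b: "g \<in> Arr T \<and> lift S g i x \<and> lift S g j y \<and> (i, x) \<noteq> (j, y)"
    then have "Dom T g \<in> F" using goodD[OF gs, of g i x j y] by blast
    then show "Dom T g \<in> F'" using \<open>F \<subseteq> F'\<close> by blast
  qed
  then show "RR F \<le> RR F'" unfolding le_fun_def subset_iff RR_mem by blast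
next
  assume le: "RR F \<le> RR F'"
  show "F \<subseteq> F'"
  proof
    fix V assume VF: "V \<in> F"
    have V: "V \<in> Obj T" using F VF unfolding is_family_def by blast
    have hV: "hom (Idt T V) V V" using id_hom[OF V] .
    have "good F (replicate 2 (Idt T V))" unfolding good_def
    proof (intro allI impI)
      fix g i x j y assume a: "g \<in> Arr T \<and> lift (replicate 2 (Idt T V)) g i x \<and> lift (replicate 2 (Idt T V)) g j y \<and> (i, x) \<noteq> (j, y)"
      then have i2: "i < 2" "hom x (Dom T g) (Dom T (replicate 2 (Idt T V) ! i))" "Comp T (replicate 2 (Idt T V) ! i) x = g"
        unfolding lift_def by auto
      then have r: "replicate 2 (Idt T V) ! i = Idt T V" by simp
      have hx: "hom x (Dom T g) V" using i2(2) hV unfolding r by (simp add: hom_def)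
      have "Comp T (Idt T V) x = g" using i2(3) unfolding r .
      then have "g = x" using id_left[OF hx] by simp
      then have "Cod T g = V" using hx by (simp add: hom_def)
      moreover have "g \<in> Arr T" using a by blast
      ultimately show "Dom T g \<in> F" using F VF unfolding is_family_def by blast
    qed
    moreover have "fVobj T V (replicate 2 (Idt T V))" using V hV unfolding fVobj_def hom_def by simp
    ultimately have "replicate 2 (Idt T V) \<in> RR F V" unfolding RR_mem using V by blast
    then have "replicate 2 (Idt T V) \<in> RR F' V" using le unfolding le_fun_def by blast
    then have "V \<in> nabla_u T (RR F')" unfolding nabla_u_def using V by blast
    then show "V \<in> F'" using nabla_RR by blast
  qed
qed

end


context tcat
begin

definition jw :: "('o, 'm) tsubcat \<Rightarrow> 'o set \<Rightarrow> 'm list \<Rightarrow> 'm list \<Rightarrow> (nat \<Rightarrow> nat) \<Rightarrow> (nat \<Rightarrow> 'm) \<Rightarrow> bool" where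
  "jw C F' A S \<pi> x \<longleftrightarrow> (\<forall>k<length S. \<pi> k < length A \<and> hom (x k) (Dom T (S!k)) (Dom T (A!\<pi> k)) \<and>
      Comp T (A!\<pi> k) (x k) = S!k \<and> [x k] \<in> C (Dom T (A!\<pi> k)) \<and>
      (Dom T (A!\<pi> k) \<notin> F' \<longrightarrow> iso (x k) \<and> (\<forall>k'<length S. \<pi> k' = \<pi> k \<longrightarrow> k' = k)))"

definition Jd :: "('o, 'm) tsubcat \<Rightarrow> 'o set \<Rightarrow> ('o, 'm) tsubcat" where
  "Jd C F' V = {S. V \<in> Obj T \<and> fVobj T V S \<and> (\<exists>A \<pi> x. A \<in> C V \<and> jw C F' A S \<pi> x)}"

lemma Jd_mem: "S \<in> Jd C F' V \<longleftrightarrow> V \<in> Obj T \<and> fVobj T V S \<and> (\<exists>A \<pi> x. A \<in> C V \<and> jw C F' A S \<pi> x)"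
  unfolding Jd_def by simp

lemma jwD: assumes "jw C F' A S \<pi> x" "k < length S"
  shows "\<pi> k < length A" "hom (x k) (Dom T (S!k)) (Dom T (A!\<pi> k))" "Comp T (A!\<pi> k) (x k) = S!k"
    "[x k] \<in> C (Dom T (A!\<pi> k))"
    "Dom T (A!\<pi> k) \<notin> F' \<Longrightarrow> iso (x k)"
    "Dom T (A!\<pi> k) \<notin> F' \<Longrightarrow> k' < length S \<Longrightarrow> \<pi> k' = \<pi> k \<Longrightarrow> k' = k"
  using assms unfolding jw_def by blast+

lemma C_le_Jd: assumes u: "uni_wIndSys T C" shows "C \<le> Jd C F'"
proof (rule le_funI, rule subsetI)
  fix V S assume SC: "S \<in> C V"
  have VS: "V \<in> Obj T" "fVobj T V S" using C_obj[OF U_w[OF u] SC] by auto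
  have "jw C F' S S id (\<lambda>k. Idt T (Dom T (S!k)))" unfolding jw_def
  proof (intro allI impI)
    fix k assume k: "k < length S"
    have hS: "hom (S!k) (Dom T (S!k)) V" using fVobjD[OF VS(2) k] .
    have D: "Dom T (S!k) \<in> Obj T" using hom_obj hS by blast
    show "id k < length S \<and> hom (Idt T (Dom T (S!k))) (Dom T (S!k)) (Dom T (S!id k)) \<and>
      Comp T (S!id k) (Idt T (Dom T (S!k))) = S!k \<and> [Idt T (Dom T (S!k))] \<in> C (Dom T (S!id k)) \<and>
      (Dom T (S!id k) \<notin> F' \<longrightarrow> iso (Idt T (Dom T (S!k))) \<and> (\<forall>k'<length S. id k' = id k \<longrightarrow> k' = k))"
      using k id_hom[OF D] hS U_basic[OF u D] id_iso[OF D] by simp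
  qed
  then show "S \<in> Jd C F' V" unfolding Jd_mem using VS SC by blast
qed

lemma Jd_split: assumes "S @ S' \<in> Jd C F' V" shows "S \<in> Jd C F' V \<and> S' \<in> Jd C F' V"
proof -
  obtain A \<pi> x where a: "V \<in> Obj T" "fVobj T V (S @ S')" "A \<in> C V" "jw C F' A (S @ S') \<pi> x"
    using assms unfolding Jd_mem by blast
  have "jw C F' A S \<pi> x" unfolding jw_def
  proof (intro allI impI)
    fix k assume k: "k < length S"
    then have k2: "k < length (S @ S')" by simp
    have e: "(S @ S')!k = S!k" using k by (simp add: nth_append)
    show "\<pi> k < length A \<and> hom (x k) (Dom T (S!k)) (Dom T (A!\<pi> k)) \<and>
      Comp T (A!\<pi> k) (x k) = S!k \<and> [x k] \<in> C (Dom T (A!\<pi> k)) \<and>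
      (Dom T (A!\<pi> k) \<notin> F' \<longrightarrow> iso (x k) \<and> (\<forall>k'<length S. \<pi> k' = \<pi> k \<longrightarrow> k' = k))"
      using jwD[OF a(4) k2] e by auto
  qed
  moreover have "jw C F' A S' (\<lambda>k. \<pi> (length S + k)) (\<lambda>k. x (length S + k))" unfolding jw_def
  proof (intro allI impI)
    fix k assume k: "k < length S'"
    then have k2: "length S + k < length (S @ S')" by simp
    have e: "(S @ S')!(length S + k) = S'!k" by (simp add: nth_append)
    have inj: "k' = k" if "Dom T (A!\<pi> (length S + k)) \<notin> F'" "k' < length S'" "\<pi> (length S + k') = \<pi> (length S + k)" for k'
      using jwD(6)[OF a(4) k2 that(1), of "length S + k'"] that by simp
    show "\<pi> (length S + k) < length A \<and> hom (x (length S + k)) (Dom T (S'!k)) (Dom T (A!\<pi> (length S + k))) \<and>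
      Comp T (A!\<pi> (length S + k)) (x (length S + k)) = S'!k \<and> [x (length S + k)] \<in> C (Dom T (A!\<pi> (length S + k))) \<and>
      (Dom T (A!\<pi> (length S + k)) \<notin> F' \<longrightarrow> iso (x (length S + k)) \<and>
         (\<forall>k'<length S'. \<pi> (length S + k') = \<pi> (length S + k) \<longrightarrow> k' = k))"
      using jwD[OF a(4) k2] e inj by auto
  qed
  moreover have "fVobj T V S" "fVobj T V S'" using a(2) unfolding fVobj_def by auto
  ultimately show ?thesis unfolding Jd_mem using a by blast
qed

lemma Jd_iso: assumes S: "S \<in> Jd C F' V" and S': "fVobj T V S'" and iso: "fV_iso T S S'"
  and u: "uni_wIndSys T C"
  shows "S' \<in> Jd C F' V"
proof -
  obtain A \<pi> x where a: "V \<in> Obj T" "fVobj T V S" "A \<in> C V" "jw C F' A S \<pi> x"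
    using S unfolding Jd_mem by blast
  obtain \<sigma> \<phi> where b: "bij_betw \<sigma> {..<length S} {..<length S'}" and
    c: "\<forall>i<length S. is_iso_arr T (\<phi> i) \<and> Dom T (\<phi> i) = Dom T (S!i) \<and>
        Cod T (\<phi> i) = Dom T (S'!(\<sigma> i)) \<and> Comp T (S'!(\<sigma> i)) (\<phi> i) = S!i"
    using iso unfolding fV_iso_def by auto
  define \<rho> where "\<rho> = the_inv_into {..<length S} \<sigma>"
  have \<rho>: "\<rho> k' < length S" "\<sigma> (\<rho> k') = k'" if k': "k' < length S'" for k'
  proof -
    have inj: "inj_on \<sigma> {..<length S}" and im: "k' \<in> \<sigma> ` {..<length S}" using b k' unfolding bij_betw_def by auto
    show "\<rho> k' < length S" using the_inv_into_into[OF inj im, of "{..<length S}"] unfolding \<rho>_def by simp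
    show "\<sigma> (\<rho> k') = k'" using f_the_inv_into_f[OF inj im] unfolding \<rho>_def by simp
  qed
  have AV: "fVobj T V A" using C_obj[OF U_w[OF u] a(3)] by blast
  have "jw C F' A S' (\<lambda>k'. \<pi> (\<rho> k')) (\<lambda>k'. Comp T (x (\<rho> k')) (inv (\<phi> (\<rho> k'))))" unfolding jw_def
  proof (intro allI impI)
    fix k' assume k': "k' < length S'"
    let ?i = "\<rho> k'"
    have i: "?i < length S" "\<sigma> ?i = k'" using \<rho> k' by auto
    have ip: "iso (\<phi> ?i)" using c i iso_def by auto
    have hp: "hom (\<phi> ?i) (Dom T (S!?i)) (Dom T (S'!k'))" using c i iso_arr[OF ip] by (auto simp: hom_def)
    have hi: "hom (inv (\<phi> ?i)) (Dom T (S'!k')) (Dom T (S!?i))" using inv_props(1)[OF ip] hp by (auto simp: hom_def)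
    have hs': "hom (S'!k') (Dom T (S'!k')) V" using fVobjD[OF S' k'] .
    have hx: "hom (x ?i) (Dom T (S!?i)) (Dom T (A!\<pi> ?i))" using jwD(2)[OF a(4) i(1)] .
    have pa: "\<pi> ?i < length A" using jwD(1)[OF a(4) i(1)] .
    have hA: "hom (A!\<pi> ?i) (Dom T (A!\<pi> ?i)) V" using fVobjD[OF AV pa] .
    have hxi: "hom (Comp T (x ?i) (inv (\<phi> ?i))) (Dom T (S'!k')) (Dom T (A!\<pi> ?i))" using hi hx by auto
    have "Comp T (A!\<pi> ?i) (Comp T (x ?i) (inv (\<phi> ?i))) = Comp T (Comp T (A!\<pi> ?i) (x ?i)) (inv (\<phi> ?i))"
      using assoc[OF hi hx hA] .
    also have "\<dots> = Comp T (S!?i) (inv (\<phi> ?i))" using jwD(3)[OF a(4) i(1)] by simp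
    also have "\<dots> = Comp T (Comp T (S'!k') (\<phi> ?i)) (inv (\<phi> ?i))" using c i by auto
    also have "\<dots> = Comp T (S'!k') (Comp T (\<phi> ?i) (inv (\<phi> ?i)))" using assoc[OF hi hp hs'] by simp
    also have "\<dots> = S'!k'" using inv_props(3)[OF ip] hp hs' by (auto simp: hom_def)
    finally have e: "Comp T (A!\<pi> ?i) (Comp T (x ?i) (inv (\<phi> ?i))) = S'!k'" .
    have cx: "[x ?i] \<in> C (Dom T (A!\<pi> ?i))" using jwD(4)[OF a(4) i(1)] .
    have "fV_iso T [x ?i] [Comp T (x ?i) (inv (\<phi> ?i))]"
      using fV_iso_single[OF hx inv_iso[OF ip]] inv_props(1)[OF ip] hp by (auto simp: hom_def)
    moreover have "fVobj T (Dom T (A!\<pi> ?i)) [Comp T (x ?i) (inv (\<phi> ?i))]"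
      using hxi hom_obj(2)[OF hxi] unfolding fVobj_def hom_def by auto
    ultimately have cx': "[Comp T (x ?i) (inv (\<phi> ?i))] \<in> C (Dom T (A!\<pi> ?i))"
      using C_iso[OF U_w[OF u] cx] by blast
    have nf: "iso (Comp T (x ?i) (inv (\<phi> ?i))) \<and> (\<forall>k2<length S'. \<pi> (\<rho> k2) = \<pi> ?i \<longrightarrow> k2 = k')"
      if nF: "Dom T (A!\<pi> ?i) \<notin> F'"
    proof
      show "iso (Comp T (x ?i) (inv (\<phi> ?i)))"
        using comp_iso[OF inv_iso[OF ip] jwD(5)[OF a(4) i(1) nF]] inv_props(1)[OF ip] hx hp by (auto simp: hom_def)
      show "\<forall>k2<length S'. \<pi> (\<rho> k2) = \<pi> ?i \<longrightarrow> k2 = k'"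
      proof (intro allI impI)
        fix k2 assume k2: "k2 < length S'" "\<pi> (\<rho> k2) = \<pi> ?i"
        have "\<rho> k2 = ?i" using jwD(6)[OF a(4) i(1) nF, of "\<rho> k2"] \<rho>[OF k2(1)] k2 by simp
        then show "k2 = k'" using \<rho>[OF k2(1)] i by metis
      qed
    qed
    show "\<pi> ?i < length A \<and> hom (Comp T (x ?i) (inv (\<phi> ?i))) (Dom T (S'!k')) (Dom T (A!\<pi> ?i)) \<and>
      Comp T (A!\<pi> ?i) (Comp T (x ?i) (inv (\<phi> ?i))) = S'!k' \<and> [Comp T (x ?i) (inv (\<phi> ?i))] \<in> C (Dom T (A!\<pi> ?i)) \<and>
      (Dom T (A!\<pi> ?i) \<notin> F' \<longrightarrow> iso (Comp T (x ?i) (inv (\<phi> ?i))) \<and> (\<forall>k2<length S'. \<pi> (\<rho> k2) = \<pi> ?i \<longrightarrow> k2 = k'))"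
      using pa hxi e cx' nf by blast
  qed
  then show ?thesis unfolding Jd_mem using a S' by blast
qed

end


context tcat
begin

lemma EF_le_Jd: assumes u: "uni_wIndSys T C" shows "EFinf T F' \<le> Jd C F'"
proof (rule le_funI, rule subsetI)
  fix V S assume "S \<in> EFinf T F' V"
  then have a: "V \<in> F'" "V \<in> Obj T" "fVobj T V S" "\<exists>n. fV_iso T S (replicate n (Idt T V))"
    unfolding EFinf_def by (auto split: if_splits)
  have Si: "\<forall>s\<in>set S. iso s" using a(4) fV_iso_rep[OF a(3)] by blast
  have hV: "hom (Idt T V) V V" using id_hom[OF a(2)] .
  have "jw C F' [Idt T V] S (\<lambda>k. 0) (\<lambda>k. S!k)" unfolding jw_def
  proof (intro allI impI)
    fix k assume k: "k < length S"
    have hS: "hom (S!k) (Dom T (S!k)) V" using fVobjD[OF a(3) k] .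
    have "fVobj T V [S!k]" using hS a(2) unfolding fVobj_def hom_def by auto
    then have m: "[S!k] \<in> C V" using U_isolist[OF u] Si k by auto
    show "0 < length [Idt T V] \<and> hom (S!k) (Dom T (S!k)) (Dom T ([Idt T V]!0)) \<and>
      Comp T ([Idt T V]!0) (S!k) = S!k \<and> [S!k] \<in> C (Dom T ([Idt T V]!0)) \<and>
      (Dom T ([Idt T V]!0) \<notin> F' \<longrightarrow> iso (S!k) \<and> (\<forall>k'<length S. (0::nat) = 0 \<longrightarrow> k' = k))"
      using hS hV m a(1) by (simp add: hom_def)
  qed
  moreover have "[Idt T V] \<in> C V" using U_basic[OF u a(2)] by blast
  ultimately show "S \<in> Jd C F' V" unfolding Jd_mem using a by blast
qed

lemma distinct_le1: "distinct xs \<Longrightarrow> (\<And>a b. a \<in> set xs \<Longrightarrow> b \<in> set xs \<Longrightarrow> a = b) \<Longrightarrow> xs = [] \<or> (\<exists>a. xs = [a])"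
  by (cases xs) (auto, metis distinct.simps(2) list.set_intros(1) neq_Nil_conv set_ConsD)

lemma Jd_le: assumes u: "uni_wIndSys T C" and E: "wIndSys T E" and CE: "C \<le> E" and FE: "EFinf T F' \<le> E"
  shows "Jd C F' \<le> E"
proof (rule le_funI, rule subsetI)
  fix V S assume "S \<in> Jd C F' V"
  then obtain A \<pi> x where a: "V \<in> Obj T" "fVobj T V S" "A \<in> C V" "jw C F' A S \<pi> x"
    unfolding Jd_mem by blast
  have AV: "fVobj T V A" using C_obj[OF U_w[OF u] a(3)] by blast
  define ks where "ks j = filter (\<lambda>k. \<pi> k = j) [0..<length S]" for j
  define Xs where "Xs = map (\<lambda>j. map x (ks j)) [0..<length A]"
  have ks_set: "set (ks j) = {k. k < length S \<and> \<pi> k = j}" for j unfolding ks_def by auto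
  have ks_dist: "distinct (ks j)" for j unfolding ks_def by simp
  have lX: "length Xs = length A" unfolding Xs_def by simp
  have Xj: "Xs!j = map x (ks j)" if "j < length A" for j using that unfolding Xs_def by simp
  have memE: "Xs!j \<in> E (Dom T (A!j))" if j: "j < length A" for j
  proof -
    let ?U = "Dom T (A!j)"
    have hA: "hom (A!j) ?U V" using fVobjD[OF AV j] .
    have U: "?U \<in> Obj T" using hom_obj hA by blast
    show ?thesis
    proof (cases "?U \<in> F'")
      case False
      have "ks j = [] \<or> (\<exists>k. ks j = [k])"
      proof (rule distinct_le1[OF ks_dist])
        fix k1 k2 assume "k1 \<in> set (ks j)" "k2 \<in> set (ks j)"
        then have "k1 < length S" "k2 < length S" "\<pi> k1 = j" "\<pi> k2 = j" using ks_set by auto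
        then show "k1 = k2" using jwD(6)[OF a(4), of k1 k2] False by auto
      qed
      then show ?thesis
      proof
        assume "ks j = []"
        then show ?thesis using Xj[OF j] U_basic[OF u U] CE by (auto simp: le_fun_def)
      next
        assume "\<exists>k. ks j = [k]"
        then obtain k where kk: "ks j = [k]" by blast
        then have k: "k < length S" "\<pi> k = j" using ks_set[of j] by auto
        then have "[x k] \<in> C ?U" using jwD(4)[OF a(4) k(1)] by simp
        then show ?thesis using Xj[OF j] kk CE by (auto simp: le_fun_def)
      qed
    next
      case True
      let ?m = "length (ks j)"
      have hU: "hom (Idt T ?U) ?U ?U" using id_hom[OF U] .
      have rep: "replicate ?m (Idt T ?U) \<in> E ?U"
      proof -
        have "fVobj T ?U (replicate ?m (Idt T ?U))" using hU U unfolding fVobj_def hom_def by auto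
        moreover have "fV_iso T (replicate ?m (Idt T ?U)) (replicate ?m (Idt T ?U))"
          using fV_iso_rep[OF calculation] id_iso[OF U] by simp
        ultimately have "replicate ?m (Idt T ?U) \<in> EFinf T F' ?U" unfolding EFinf_def using True U by auto
        then show ?thesis using FE by (auto simp: le_fun_def)
      qed
      have hx: "hom (x k) (Dom T (S!k)) ?U" if "k \<in> set (ks j)" for k
        using jwD(2)[OF a(4)] that ks_set by auto
      have "fcoprod T (replicate ?m (Idt T ?U)) (map (\<lambda>y. [y]) (map x (ks j))) \<in> E ?U"
      proof (rule C_cop[OF E rep])
        show "length (map (\<lambda>y. [y]) (map x (ks j))) = length (replicate ?m (Idt T ?U))" by simp
        fix i assume i: "i < length (replicate ?m (Idt T ?U))"
        then have ki: "ks j ! i \<in> set (ks j)" by simp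
        then have kk: "ks j ! i < length S" "\<pi> (ks j ! i) = j" using ks_set by auto
        then have "[x (ks j ! i)] \<in> C ?U" using jwD(4)[OF a(4) kk(1)] by simp
        then show "map (\<lambda>y. [y]) (map x (ks j)) ! i \<in> E (Dom T (replicate ?m (Idt T ?U) ! i))"
          using i hU CE by (auto simp: le_fun_def hom_def)
      qed
      moreover have "fcoprod T (replicate ?m (Idt T ?U)) (map (\<lambda>y. [y]) (map x (ks j))) = map x (ks j)"
      proof -
        have "fcoprod T (replicate ?m (Idt T ?U)) (map (\<lambda>y. [y]) (map x (ks j))) = map (Comp T (Idt T ?U)) (map x (ks j))"
          by (rule fcoprod_rep) simp
        also have "\<dots> = map x (ks j)"
        proof (rule map_idI)
          fix y assume "y \<in> set (map x (ks j))"
          then obtain k where "k \<in> set (ks j)" "y = x k" by auto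
          then show "Comp T (Idt T ?U) y = y" using id_left[OF hx] by simp
        qed
        finally show ?thesis .
      qed
      ultimately show ?thesis using Xj[OF j] by simp
    qed
  qed
  have FE': "fcoprod T A Xs \<in> E V"
    by (rule C_cop[OF E]) (use a(3) CE memE lX in \<open>auto simp: le_fun_def\<close>)
  let ?ls = "map length Xs"
  let ?N = "length (fcoprod T A Xs)"
  have N: "?N = sum_list ?ls" using fcoprod_len[OF lX] .
  have lsj: "?ls!j = length (ks j)" if "j < length A" for j using Xj[OF that] lX that by simp
  have "\<forall>n<?N. \<exists>jl. fst jl < length A \<and> snd jl < length (ks (fst jl)) \<and> n = pos ?ls (fst jl) (snd jl)"
  proof (intro allI impI)
    fix n assume "n < ?N"
    then obtain j l where "j < length ?ls" "l < ?ls!j" "n = pos ?ls j l" using pos_surj N by metis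
    then show "\<exists>jl. fst jl < length A \<and> snd jl < length (ks (fst jl)) \<and> n = pos ?ls (fst jl) (snd jl)"
      using lsj lX by (intro exI[of _ "(j,l)"]) auto
  qed
  then obtain JL where JL: "\<And>n. n < ?N \<Longrightarrow> fst (JL n) < length A \<and> snd (JL n) < length (ks (fst (JL n))) \<and>
       n = pos ?ls (fst (JL n)) (snd (JL n))" by metis
  define \<sigma> where "\<sigma> n = ks (fst (JL n)) ! (snd (JL n))" for n
  have \<sigma>k: "\<sigma> n < length S \<and> \<pi> (\<sigma> n) = fst (JL n)" if "n < ?N" for n
  proof -
    have "\<sigma> n \<in> set (ks (fst (JL n)))" unfolding \<sigma>_def using JL[OF that] by simp
    then show ?thesis using ks_set by auto
  qed
  have fn: "fcoprod T A Xs ! n = S!(\<sigma> n)" if n: "n < ?N" for n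
  proof -
    have "fcoprod T A Xs ! n = Comp T (A!fst (JL n)) (Xs!fst (JL n)!snd (JL n))"
      using fcoprod_nth[OF lX, of "fst (JL n)" "snd (JL n)" T] JL[OF n] Xj by auto
    also have "\<dots> = Comp T (A!\<pi> (\<sigma> n)) (x (\<sigma> n))" using Xj JL[OF n] \<sigma>k[OF n] unfolding \<sigma>_def by auto
    also have "\<dots> = S!(\<sigma> n)" using jwD(3)[OF a(4) conjunct1[OF \<sigma>k[OF n]]] by simp
    finally show ?thesis .
  qed
  have bij: "bij_betw \<sigma> {..<?N} {..<length S}"
    unfolding bij_betw_def
  proof
    show "inj_on \<sigma> {..<?N}"
    proof (rule inj_onI)
      fix n1 n2 assume n1: "n1 \<in> {..<?N}" and n2: "n2 \<in> {..<?N}" and e: "\<sigma> n1 = \<sigma> n2"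
      have j: "fst (JL n1) = fst (JL n2)" using \<sigma>k n1 n2 e by (metis lessThan_iff)
      have "snd (JL n1) = snd (JL n2)"
        using e j JL n1 n2 ks_dist unfolding \<sigma>_def by (metis lessThan_iff nth_eq_iff_index_eq)
      then show "n1 = n2" using j JL n1 n2 by (metis lessThan_iff)
    qed
    show "\<sigma> ` {..<?N} = {..<length S}"
    proof
      show "\<sigma> ` {..<?N} \<subseteq> {..<length S}" using \<sigma>k by auto
      show "{..<length S} \<subseteq> \<sigma> ` {..<?N}"
      proof
        fix k assume k: "k \<in> {..<length S}"
        let ?j = "\<pi> k"
        have j: "?j < length A" using jwD(1)[OF a(4)] k by auto
        have "k \<in> set (ks ?j)" using ks_set k by auto
        then obtain l where l: "l < length (ks ?j)" "ks ?j ! l = k" by (metis in_set_conv_nth)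
        let ?n = "pos ?ls ?j l"
        have nN: "?n < ?N" using pos_bound[of ?j ?ls l] N lsj[OF j] l j lX by simp
        have "fst (JL ?n) = ?j \<and> snd (JL ?n) = l"
          using pos_inj[of "fst (JL ?n)" ?ls "snd (JL ?n)" ?j l] JL[OF nN] lsj j l lX by auto
        then have "\<sigma> ?n = k" unfolding \<sigma>_def using l by simp
        then show "k \<in> \<sigma> ` {..<?N}" using nN by force
      qed
    qed
  qed
  have "fV_iso T (fcoprod T A Xs) S" unfolding fV_iso_def
  proof (intro exI[of _ \<sigma>] exI[of _ "\<lambda>n. Idt T (Dom T (fcoprod T A Xs ! n))"] conjI allI impI)
    show "bij_betw \<sigma> {..<?N} {..<length S}" using bij .
  next
    fix n assume n: "n < ?N"
    have hs: "hom (S!\<sigma> n) (Dom T (S!\<sigma> n)) V" using fVobjD[OF a(2)] \<sigma>k[OF n] by blast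
    have D: "Dom T (S!\<sigma> n) \<in> Obj T" using hom_obj hs by blast
    show "is_iso_arr T (Idt T (Dom T (fcoprod T A Xs ! n)))" using id_iso[OF D] fn[OF n] iso_def by simp
    show "Dom T (Idt T (Dom T (fcoprod T A Xs ! n))) = Dom T (fcoprod T A Xs ! n)"
      using id_hom[OF D] fn[OF n] by (simp add: hom_def)
    show "Cod T (Idt T (Dom T (fcoprod T A Xs ! n))) = Dom T (S ! \<sigma> n)"
      using id_hom[OF D] fn[OF n] by (simp add: hom_def)
    show "Comp T (S ! \<sigma> n) (Idt T (Dom T (fcoprod T A Xs ! n))) = fcoprod T A Xs ! n"
      using hs fn[OF n] by simp
  qed
  then show "S \<in> E V" using C_iso[OF E FE' a(2)] by blast
qed

end


context atcat
begin

lemma Jd_res: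
  assumes u: "uni_wIndSys T C" and F': "is_family T F'" and g: "g \<in> Arr T"
    and S: "S \<in> Jd C F' (Cod T g)" and P: "fVobj T (Dom T g) P" and res: "is_restriction T g S P"
  shows "P \<in> Jd C F' (Dom T g)"
proof -
  let ?V = "Cod T g" and ?W = "Dom T g"
  obtain A \<pi> x where a: "?V \<in> Obj T" "fVobj T ?V S" "A \<in> C ?V" "jw C F' A S \<pi> x"
    using S unfolding Jd_mem by blast
  have W: "?W \<in> Obj T" using arr_obj g by auto
  have hg: "hom g ?W ?V" using g by auto
  have AV: "fVobj T ?V A" using C_obj[OF U_w[OF u] a(3)] by blast
  have fam: "\<And>f. f \<in> Arr T \<Longrightarrow> Cod T f \<in> F' \<Longrightarrow> Dom T f \<in> F'" using F' unfolding is_family_def by blast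
  obtain q where q: "rdata g S P q" using restriction_rdata[OF g a(2) P res] by blast
  have cone_q: "\<And>k. k<length P \<Longrightarrow> fst (q!k) < length S \<and> hom (snd (q!k)) (Dom T (P!k)) (Dom T (S!fst(q!k))) \<and>
       Comp T (S!fst(q!k)) (snd(q!k)) = Comp T g (P!k)"
    and ex_q: "\<And>A0 i x y. A0 \<in> Obj T \<Longrightarrow> i < length S \<Longrightarrow> hom x A0 (Dom T (S!i)) \<Longrightarrow> hom y A0 (Dom T g) \<Longrightarrow>
        Comp T (S!i) x = Comp T g y \<Longrightarrow>
       (\<exists>k c. k < length P \<and> hom c A0 (Dom T (P!k)) \<and> fst (q!k) = i \<and> Comp T (snd (q!k)) c = x \<and> Comp T (P!k) c = y)"
    and un_q: "\<And>A0 k c k' c'. k < length P \<Longrightarrow> k' < length P \<Longrightarrow> hom c A0 (Dom T (P!k)) \<Longrightarrow> hom c' A0 (Dom T (P!k')) \<Longrightarrow>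
       fst(q!k) = fst(q!k') \<Longrightarrow> Comp T (snd (q!k)) c = Comp T (snd(q!k')) c' \<Longrightarrow> Comp T (P!k) c = Comp T (P!k') c' \<Longrightarrow>
       k = k' \<and> c = c'"
    using q unfolding rdata_def by blast+
  obtain A' where A': "fVobj T ?W A'" "is_restriction T g A A'" using exists_restriction[OF orb g AV] by blast
  have A'C: "A' \<in> C ?W" using C_res[OF U_w[OF u] g a(3) A'] .
  obtain qa where qa: "rdata g A A' qa" using restriction_rdata[OF g AV A'] by blast
  have cone_a: "\<And>k. k<length A' \<Longrightarrow> fst (qa!k) < length A \<and> hom (snd (qa!k)) (Dom T (A'!k)) (Dom T (A!fst(qa!k))) \<and>
       Comp T (A!fst(qa!k)) (snd(qa!k)) = Comp T g (A'!k)"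
    and ex_a: "\<And>A0 i x y. A0 \<in> Obj T \<Longrightarrow> i < length A \<Longrightarrow> hom x A0 (Dom T (A!i)) \<Longrightarrow> hom y A0 (Dom T g) \<Longrightarrow>
        Comp T (A!i) x = Comp T g y \<Longrightarrow>
       (\<exists>k c. k < length A' \<and> hom c A0 (Dom T (A'!k)) \<and> fst (qa!k) = i \<and> Comp T (snd (qa!k)) c = x \<and> Comp T (A'!k) c = y)"
    using qa unfolding rdata_def by blast+
  have pt: "\<exists>kc. fst kc < length A' \<and> hom (snd kc) (Dom T (P!k)) (Dom T (A'!fst kc)) \<and>
      fst (qa!fst kc) = \<pi> (fst (q!k)) \<and> Comp T (snd (qa!fst kc)) (snd kc) = Comp T (x (fst (q!k))) (snd (q!k)) \<and>
      Comp T (A'!fst kc) (snd kc) = P!k" if k: "k < length P" for k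
  proof -
    let ?i = "fst (q!k)" and ?r = "snd (q!k)"
    have ck: "?i < length S" "hom ?r (Dom T (P!k)) (Dom T (S!?i))" "Comp T (S!?i) ?r = Comp T g (P!k)"
      using cone_q[OF k] by auto
    have hx: "hom (x ?i) (Dom T (S!?i)) (Dom T (A!\<pi> ?i))" using jwD(2)[OF a(4) ck(1)] .
    have pj: "\<pi> ?i < length A" using jwD(1)[OF a(4) ck(1)] .
    have hA: "hom (A!\<pi> ?i) (Dom T (A!\<pi> ?i)) ?V" using fVobjD[OF AV pj] .
    have hP: "hom (P!k) (Dom T (P!k)) ?W" using fVobjD[OF P k] .
    have D: "Dom T (P!k) \<in> Obj T" using hom_obj hP by blast
    have "Comp T (A!\<pi> ?i) (Comp T (x ?i) ?r) = Comp T (Comp T (A!\<pi> ?i) (x ?i)) ?r" using assoc[OF ck(2) hx hA] .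
    also have "\<dots> = Comp T g (P!k)" using jwD(3)[OF a(4) ck(1)] ck(3) by simp
    finally have e: "Comp T (A!\<pi> ?i) (Comp T (x ?i) ?r) = Comp T g (P!k)" .
    obtain k' c where "k' < length A'" "hom c (Dom T (P!k)) (Dom T (A'!k'))" "fst (qa!k') = \<pi> ?i"
      "Comp T (snd (qa!k')) c = Comp T (x ?i) ?r" "Comp T (A'!k') c = P!k"
      using ex_a[OF D pj comp_hom[OF ck(2) hx] hP e] by blast
    then show ?thesis by (intro exI[of _ "(k',c)"]) auto
  qed
  obtain KC where KC: "\<And>k. k < length P \<Longrightarrow> fst (KC k) < length A' \<and> hom (snd (KC k)) (Dom T (P!k)) (Dom T (A'!fst (KC k))) \<and>
      fst (qa!fst (KC k)) = \<pi> (fst (q!k)) \<and> Comp T (snd (qa!fst (KC k))) (snd (KC k)) = Comp T (x (fst (q!k))) (snd (q!k)) \<and>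
      Comp T (A'!fst (KC k)) (snd (KC k)) = P!k"
    using pt by metis
  define \<pi>' where "\<pi>' k = fst (KC k)" for k
  define x' where "x' k = snd (KC k)" for k
  have core: "\<exists>z e d. z < length Z \<and> hom e (Dom T (P!k)) (Dom T (Z!z)) \<and> iso e \<and> Comp T (Z!z) e = x' k \<and>
      hom d (Dom T (Z!z)) (Dom T (P!k)) \<and> Comp T (snd (q!k)) d = snd (qz!z) \<and> Comp T (P!k) d = Comp T (A'!\<pi>' k) (Z!z)"
    if k: "k < length P" and Z: "fVobj T (Dom T (A'!\<pi>' k)) Z" and qz: "rdata (snd (qa!\<pi>' k)) [x (fst (q!k))] Z qz"
    for k Z qz
  proof -
    let ?i = "fst (q!k)" and ?r = "snd (q!k)" and ?k' = "\<pi>' k" and ?c = "x' k"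
    let ?a = "snd (qa!?k')" and ?j = "\<pi> (fst (q!k))"
    have ck: "?i < length S" "hom ?r (Dom T (P!k)) (Dom T (S!?i))" "Comp T (S!?i) ?r = Comp T g (P!k)"
      using cone_q[OF k] by auto
    have hx: "hom (x ?i) (Dom T (S!?i)) (Dom T (A!?j))" using jwD(2)[OF a(4) ck(1)] .
    have kc: "?k' < length A'" "hom ?c (Dom T (P!k)) (Dom T (A'!?k'))" "fst (qa!?k') = ?j"
      "Comp T ?a ?c = Comp T (x ?i) ?r" "Comp T (A'!?k') ?c = P!k"
      using KC[OF k] unfolding \<pi>'_def x'_def by auto
    have ca: "hom ?a (Dom T (A'!?k')) (Dom T (A!?j))" "Comp T (A!?j) ?a = Comp T g (A'!?k')"
      using cone_a[OF kc(1)] kc(3) by auto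
    have hP: "hom (P!k) (Dom T (P!k)) ?W" using fVobjD[OF P k] .
    have D: "Dom T (P!k) \<in> Obj T" using hom_obj hP by blast
    have pj: "?j < length A" using jwD(1)[OF a(4) ck(1)] .
    have hA: "hom (A!?j) (Dom T (A!?j)) ?V" using fVobjD[OF AV pj] .
    have hA': "hom (A'!?k') (Dom T (A'!?k')) ?W" using fVobjD[OF A'(1) kc(1)] .
    have hS: "hom (S!?i) (Dom T (S!?i)) ?V" using fVobjD[OF a(2) ck(1)] .
    have cone_z: "\<And>k. k<length Z \<Longrightarrow> fst (qz!k) < length [x ?i] \<and> hom (snd (qz!k)) (Dom T (Z!k)) (Dom T ([x ?i]!fst(qz!k))) \<and>
       Comp T ([x ?i]!fst(qz!k)) (snd(qz!k)) = Comp T ?a (Z!k)"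
      and ex_z: "\<And>A0 i y0 y. A0 \<in> Obj T \<Longrightarrow> i < length [x ?i] \<Longrightarrow> hom y0 A0 (Dom T ([x ?i]!i)) \<Longrightarrow> hom y A0 (Dom T ?a) \<Longrightarrow>
        Comp T ([x ?i]!i) y0 = Comp T ?a y \<Longrightarrow>
       (\<exists>k c. k < length Z \<and> hom c A0 (Dom T (Z!k)) \<and> fst (qz!k) = i \<and> Comp T (snd (qz!k)) c = y0 \<and> Comp T (Z!k) c = y)"
      using qz unfolding rdata_def by blast+
    have da: "Dom T ?a = Dom T (A'!?k')" using ca(1) by (simp add: hom_def)
    obtain z e where ze: "z < length Z" "hom e (Dom T (P!k)) (Dom T (Z!z))" "fst (qz!z) = 0"
      "Comp T (snd (qz!z)) e = ?r" "Comp T (Z!z) e = ?c"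
      using ex_z[of "Dom T (P!k)" 0 ?r ?c] D ck(2) kc(2) kc(4) da hx by (auto simp: hom_def)
    let ?w = "snd (qz!z)"
    have cz: "hom ?w (Dom T (Z!z)) (Dom T (S!?i))" "Comp T (x ?i) ?w = Comp T ?a (Z!z)"
      using cone_z[OF ze(1)] ze(3) hx by (auto simp: hom_def)
    have hZ: "hom (Z!z) (Dom T (Z!z)) (Dom T (A'!?k'))" using fVobjD[OF Z ze(1)] .
    have DZ: "Dom T (Z!z) \<in> Obj T" using hom_obj hZ by blast
    have "Comp T (S!?i) ?w = Comp T (Comp T (A!?j) (x ?i)) ?w" using jwD(3)[OF a(4) ck(1)] by simp
    also have "\<dots> = Comp T (A!?j) (Comp T (x ?i) ?w)" using assoc[OF cz(1) hx hA] by simp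
    also have "\<dots> = Comp T (A!?j) (Comp T ?a (Z!z))" using cz(2) by simp
    also have "\<dots> = Comp T (Comp T g (A'!?k')) (Z!z)" using assoc[OF hZ ca(1) hA] ca(2) by simp
    also have "\<dots> = Comp T g (Comp T (A'!?k') (Z!z))" using assoc[OF hZ hA' hg] by simp
    finally have eS: "Comp T (S!?i) ?w = Comp T g (Comp T (A'!?k') (Z!z))" .
    obtain k2 d where kd: "k2 < length P" "hom d (Dom T (Z!z)) (Dom T (P!k2))" "fst (q!k2) = ?i"
      "Comp T (snd (q!k2)) d = ?w" "Comp T (P!k2) d = Comp T (A'!?k') (Z!z)"
      using ex_q[OF DZ ck(1) cz(1) comp_hom[OF hZ hA'] eS] by blast
    have ck2: "hom (snd (q!k2)) (Dom T (P!k2)) (Dom T (S!?i))" using cone_q[OF kd(1)] kd(3) by auto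
    have hP2: "hom (P!k2) (Dom T (P!k2)) ?W" using fVobjD[OF P kd(1)] .
    have de: "hom (Comp T d e) (Dom T (P!k)) (Dom T (P!k2))" using kd(2) ze(2) by auto
    have e1: "Comp T (snd (q!k2)) (Comp T d e) = ?r" using assoc[OF ze(2) kd(2) ck2] kd(4) ze(4) by simp
    have e2: "Comp T (P!k2) (Comp T d e) = P!k"
      using assoc[OF ze(2) kd(2) hP2] kd(5) assoc[OF ze(2) hZ hA'] ze(5) kc(5) by simp
    have "k = k2 \<and> Idt T (Dom T (P!k)) = Comp T d e"
      by (rule un_q[OF k kd(1) id_hom[OF D] de]) (use kd(3) e1 e2 ck(2) hP in auto)
    then have kk: "k2 = k" and de': "Comp T d e = Idt T (Dom T (P!k))" by auto
    have hd: "hom d (Dom T (Z!z)) (Dom T (P!k))" using kd(2) kk by simp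
    have id: "iso d" using atomicD[OF hd ze(2) de'] .
    have "e = inv d" using section_iso[OF id] ze(2) hd de' by (auto simp: hom_def)
    then have ie: "iso e" using inv_iso[OF id] by simp
    show ?thesis using ze(1,2,5) ie hd kd(4,5) kk by blast
  qed
  have jw': "jw C F' A' P \<pi>' x'" unfolding jw_def
  proof (intro allI impI)
    fix k assume k: "k < length P"
    let ?i = "fst (q!k)" and ?r = "snd (q!k)" and ?k' = "\<pi>' k" and ?c = "x' k"
    let ?a = "snd (qa!?k')" and ?j = "\<pi> (fst (q!k))"
    have ck: "?i < length S" "hom ?r (Dom T (P!k)) (Dom T (S!?i))" "Comp T (S!?i) ?r = Comp T g (P!k)"
      using cone_q[OF k] by auto
    have hx: "hom (x ?i) (Dom T (S!?i)) (Dom T (A!?j))" using jwD(2)[OF a(4) ck(1)] .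
    have kc: "?k' < length A'" "hom ?c (Dom T (P!k)) (Dom T (A'!?k'))" "fst (qa!?k') = ?j"
      "Comp T ?a ?c = Comp T (x ?i) ?r" "Comp T (A'!?k') ?c = P!k"
      using KC[OF k] unfolding \<pi>'_def x'_def by auto
    have ca: "hom ?a (Dom T (A'!?k')) (Dom T (A!?j))" using cone_a[OF kc(1)] kc(3) by auto
    have aA: "?a \<in> Arr T" "Dom T ?a = Dom T (A'!?k')" "Cod T ?a = Dom T (A!?j)" using ca by (auto simp: hom_def)
    have xs: "fVobj T (Cod T ?a) [x ?i]" using hx hom_obj(2)[OF hx] aA unfolding fVobj_def hom_def by auto
    obtain Z where Z: "fVobj T (Dom T ?a) Z" "is_restriction T ?a [x ?i] Z" using exists_restriction[OF orb aA(1) xs] by blast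
    have xC: "[x ?i] \<in> C (Cod T ?a)" using jwD(4)[OF a(4) ck(1)] aA by simp
    have ZC: "Z \<in> C (Dom T (A'!?k'))" using C_res[OF U_w[OF u] aA(1) xC Z] aA by simp
    obtain qz where qz: "rdata ?a [x ?i] Z qz" using restriction_rdata[OF aA(1) xs Z] by blast
    obtain z e d where zed: "z < length Z" "hom e (Dom T (P!k)) (Dom T (Z!z))" "iso e" "Comp T (Z!z) e = ?c"
      "hom d (Dom T (Z!z)) (Dom T (P!k))" "Comp T (snd (q!k)) d = snd (qz!z)" "Comp T (P!k) d = Comp T (A'!?k') (Z!z)"
      using core[OF k _ qz] Z aA by auto
    have hZ: "hom (Z!z) (Dom T (Z!z)) (Dom T (A'!?k'))" using fVobjD[OF Z(1) zed(1)] aA by simp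
    have "[Z!z] \<in> C (Dom T (A'!?k'))" using U_single[OF u ZC zed(1)] .
    moreover have "fV_iso T [Z!z] [Comp T (Z!z) e]" using fV_iso_single[OF hZ zed(3)] zed(2) by (simp add: hom_def)
    moreover have "fVobj T (Dom T (A'!?k')) [Comp T (Z!z) e]" using zed(4) kc(2) hom_obj(2)[OF kc(2)]
      unfolding fVobj_def hom_def by auto
    ultimately have cC: "[?c] \<in> C (Dom T (A'!?k'))" using C_iso[OF U_w[OF u]] zed(4) by metis
    have nf: "iso ?c \<and> (\<forall>k2<length P. \<pi>' k2 = \<pi>' k \<longrightarrow> k2 = k)" if nF: "Dom T (A'!?k') \<notin> F'"
    proof -
      have nF2: "Dom T (A!?j) \<notin> F'" using fam[OF aA(1)] aA nF by auto
      have ix: "iso (x ?i)" using jwD(5)[OF a(4) ck(1)] nF2 by simp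
      have "(\<forall>p\<in>set Z. iso p) \<and> length Z = length [x ?i]"
        using rdata_iso[OF aA(1) xs _ Z(1) qz] ix by simp
      then have Zi: "\<forall>p\<in>set Z. iso p" and Z1: "length Z = 1" by auto
      have "iso (Z!z)" using Zi zed(1) by simp
      then have "iso ?c" using comp_iso[OF zed(3), of "Z!z"] zed(2,4) hZ by (auto simp: hom_def)
      moreover have "k2 = k" if k2: "k2 < length P" "\<pi>' k2 = \<pi>' k" for k2
      proof -
        let ?i2 = "fst (q!k2)"
        have ck2: "?i2 < length S" using cone_q[OF k2(1)] by auto
        have "fst (qa!\<pi>' k2) = \<pi> ?i2" using KC[OF k2(1)] unfolding \<pi>'_def by auto
        then have "\<pi> ?i2 = ?j" using kc(3) k2(2) by simp
        then have ii: "?i2 = ?i" using jwD(6)[OF a(4) ck(1) nF2 ck2] by simp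
        obtain z2 e2 d2 where zed2: "z2 < length Z" "hom d2 (Dom T (Z!z2)) (Dom T (P!k2))"
          "Comp T (snd (q!k2)) d2 = snd (qz!z2)" "Comp T (P!k2) d2 = Comp T (A'!\<pi>' k2) (Z!z2)"
          using core[OF k2(1), of Z qz] Z aA qz ii k2(2) by auto
        have zz: "z2 = z" using zed2(1) zed(1) Z1 by simp
        have hd2: "hom d2 (Dom T (Z!z)) (Dom T (P!k2))" using zed2(2) zz by simp
        show "k2 = k"
          using un_q[OF k2(1) k hd2 zed(5)] zed2(3,4) zed(6,7) ii k2(2) zz by simp
      qed
      ultimately show ?thesis by blast
    qed
    show "\<pi>' k < length A' \<and> hom (x' k) (Dom T (P!k)) (Dom T (A'!\<pi>' k)) \<and>
      Comp T (A'!\<pi>' k) (x' k) = P!k \<and> [x' k] \<in> C (Dom T (A'!\<pi>' k)) \<and>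
      (Dom T (A'!\<pi>' k) \<notin> F' \<longrightarrow> iso (x' k) \<and> (\<forall>k'<length P. \<pi>' k' = \<pi>' k \<longrightarrow> k' = k))"
      using kc cC nf by blast
  qed
  show ?thesis unfolding Jd_mem using W P A'C jw' by blast
qed

end


context atcat
begin

lemma Jd_cop:
  assumes u: "uni_wIndSys T C" and S: "S \<in> Jd C F' V" and l: "length Ts = length S"
    and Ts: "\<And>i. i < length S \<Longrightarrow> Ts!i \<in> Jd C F' (Dom T (S!i))"
  shows "fcoprod T S Ts \<in> Jd C F' V"
proof -
  obtain A \<pi> x where a: "V \<in> Obj T" "fVobj T V S" "A \<in> C V" "jw C F' A S \<pi> x"
    using S unfolding Jd_mem by blast
  have AV: "fVobj T V A" using C_obj[OF U_w[OF u] a(3)] by blast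
  have "\<forall>i. \<exists>t. i < length S \<longrightarrow> fst t \<in> C (Dom T (S!i)) \<and> jw C F' (fst t) (Ts!i) (fst (snd t)) (snd (snd t)) \<and> fVobj T (Dom T (S!i)) (Ts!i)"
  proof
    fix i show "\<exists>t. i < length S \<longrightarrow> fst t \<in> C (Dom T (S!i)) \<and> jw C F' (fst t) (Ts!i) (fst (snd t)) (snd (snd t)) \<and> fVobj T (Dom T (S!i)) (Ts!i)"
    proof (cases "i < length S")
      case True
      then obtain B pb xb where "B \<in> C (Dom T (S!i))" "jw C F' B (Ts!i) pb xb" "fVobj T (Dom T (S!i)) (Ts!i)"
        using Ts[OF True] unfolding Jd_mem by blast
      then show ?thesis by (intro exI[of _ "(B, pb, xb)"]) simp
    qed simp
  qed
  then obtain f where f: "\<forall>i. i < length S \<longrightarrow> fst (f i) \<in> C (Dom T (S!i)) \<and> jw C F' (fst (f i)) (Ts!i) (fst (snd (f i))) (snd (snd (f i))) \<and> fVobj T (Dom T (S!i)) (Ts!i)"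
    by (rule choice[THEN exE]) blast
  define Bf where "Bf i = fst (f i)" for i
  define Pf where "Pf i = fst (snd (f i))" for i
  define Xf where "Xf i = snd (snd (f i))" for i
  have BPX: "\<And>i. i < length S \<Longrightarrow> Bf i \<in> C (Dom T (S!i)) \<and> jw C F' (Bf i) (Ts!i) (Pf i) (Xf i) \<and>
      fVobj T (Dom T (S!i)) (Ts!i)"
    using f unfolding Bf_def Pf_def Xf_def by blast
  define I where "I j = (SOME i. i < length S \<and> \<pi> i = j)" for j
  have I: "I (\<pi> i) = i" if i: "i < length S" "Dom T (A!\<pi> i) \<notin> F'" for i
  proof -
    have "I (\<pi> i) < length S \<and> \<pi> (I (\<pi> i)) = \<pi> i" unfolding I_def by (rule someI[of _ i]) (use i in simp)
    then show ?thesis using jwD(6)[OF a(4) i(1) i(2)] by blast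
  qed
  define Ys where "Ys = map (\<lambda>j. if Dom T (A!j) \<notin> F' \<and> (\<exists>i<length S. \<pi> i = j)
      then map (Comp T (x (I j))) (Bf (I j)) else [Idt T (Dom T (A!j))]) [0..<length A]"
  have lY: "length Ys = length A" unfolding Ys_def by simp
  have Ys1: "Ys!(\<pi> i) = map (Comp T (x i)) (Bf i)" if i: "i < length S" "Dom T (A!\<pi> i) \<notin> F'" for i
    using I[OF i] i jwD(1)[OF a(4) i(1)] unfolding Ys_def by auto
  have Ys2: "Ys!j = [Idt T (Dom T (A!j))]" if j: "j < length A" "Dom T (A!j) \<in> F'" for j
    using j unfolding Ys_def by auto
  have YC: "Ys!j \<in> C (Dom T (A!j))" if j: "j < length A" for j
  proof (cases "Dom T (A!j) \<notin> F' \<and> (\<exists>i<length S. \<pi> i = j)")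
    case True
    then obtain i where i: "i < length S" "\<pi> i = j" by blast
    have nF: "Dom T (A!\<pi> i) \<notin> F'" using True i by simp
    have hx: "hom (x i) (Dom T (S!i)) (Dom T (A!j))" using jwD(2)[OF a(4) i(1)] i by simp
    have "fcoprod T [x i] [Bf i] \<in> C (Dom T (A!j))"
      by (rule C_cop[OF U_w[OF u]]) (use jwD(4)[OF a(4) i(1)] i BPX[OF i(1)] hx in \<open>auto simp: hom_def\<close>)
    then show ?thesis using Ys1[OF i(1) nF] i by (simp add: fcoprod_single)
  next
    case False
    have hA: "hom (A!j) (Dom T (A!j)) V" using fVobjD[OF AV j] .
    have D: "Dom T (A!j) \<in> Obj T" using hom_obj hA by blast
    have "Ys!j = [Idt T (Dom T (A!j))]" using False j unfolding Ys_def by auto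
    then show ?thesis using U_basic[OF u D] by simp
  qed
  have A''C: "fcoprod T A Ys \<in> C V"
    by (rule C_cop[OF U_w[OF u] a(3) lY]) (use YC in auto)
  let ?lsT = "map length Ts" and ?lsY = "map length Ys"
  let ?R = "fcoprod T S Ts" and ?A = "fcoprod T A Ys"
  have NR: "length ?R = sum_list ?lsT" using fcoprod_len[OF l] .
  have NA: "length ?A = sum_list ?lsY" using fcoprod_len[OF lY] .
  have "\<forall>n<length ?R. \<exists>il. fst il < length S \<and> snd il < length (Ts!fst il) \<and> n = pos ?lsT (fst il) (snd il)"
  proof (intro allI impI)
    fix n assume "n < length ?R"
    then obtain i m where "i < length ?lsT" "m < ?lsT!i" "n = pos ?lsT i m" using pos_surj NR by metis
    then show "\<exists>il. fst il < length S \<and> snd il < length (Ts!fst il) \<and> n = pos ?lsT (fst il) (snd il)"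
      using l by (intro exI[of _ "(i,m)"]) auto
  qed
  then obtain IL where IL: "\<And>n. n < length ?R \<Longrightarrow> fst (IL n) < length S \<and> snd (IL n) < length (Ts!fst (IL n)) \<and>
       n = pos ?lsT (fst (IL n)) (snd (IL n))" by metis
  define \<pi>'' where "\<pi>'' n = (let i = fst (IL n); m = Pf i (snd (IL n)) in
      if Dom T (A!\<pi> i) \<notin> F' then pos ?lsY (\<pi> i) m else pos ?lsY (\<pi> i) 0)" for n
  define x'' where "x'' n = (let i = fst (IL n); l = snd (IL n) in
      if Dom T (A!\<pi> i) \<notin> F' then Xf i l else Comp T (x i) (Ts!i!l))" for n
  have jw'': "jw C F' ?A ?R \<pi>'' x''" unfolding jw_def
  proof (intro allI impI)
    fix n assume n: "n < length ?R"
    let ?i = "fst (IL n)" and ?l = "snd (IL n)"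
    let ?j = "\<pi> ?i" and ?m = "Pf ?i ?l"
    have il: "?i < length S" "?l < length (Ts!?i)" "n = pos ?lsT ?i ?l" using IL[OF n] by auto
    have Rn: "?R!n = Comp T (S!?i) (Ts!?i!?l)" using fcoprod_nth[OF l il(1,2)] il(3) by simp
    have jwB: "jw C F' (Bf ?i) (Ts!?i) (Pf ?i) (Xf ?i)" using BPX[OF il(1)] by blast
    have BV: "fVobj T (Dom T (S!?i)) (Bf ?i)" using C_obj[OF U_w[OF u]] BPX[OF il(1)] by blast
    have j: "?j < length A" using jwD(1)[OF a(4) il(1)] .
    have hx: "hom (x ?i) (Dom T (S!?i)) (Dom T (A!?j))" using jwD(2)[OF a(4) il(1)] .
    have hA: "hom (A!?j) (Dom T (A!?j)) V" using fVobjD[OF AV j] .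
    have hS: "hom (S!?i) (Dom T (S!?i)) V" using fVobjD[OF a(2) il(1)] .
    have hT: "hom (Ts!?i!?l) (Dom T (Ts!?i!?l)) (Dom T (S!?i))" using fVobjD[OF BPX[THEN conjunct2, THEN conjunct2, OF il(1)] il(2)] .
    have m: "?m < length (Bf ?i)" using jwD(1)[OF jwB il(2)] .
    have hxb: "hom (Xf ?i ?l) (Dom T (Ts!?i!?l)) (Dom T (Bf ?i!?m))" using jwD(2)[OF jwB il(2)] .
    have eB: "Comp T (Bf ?i!?m) (Xf ?i ?l) = Ts!?i!?l" using jwD(3)[OF jwB il(2)] .
    have hB: "hom (Bf ?i!?m) (Dom T (Bf ?i!?m)) (Dom T (S!?i))" using fVobjD[OF BV m] .
    show "\<pi>'' n < length ?A \<and> hom (x'' n) (Dom T (?R!n)) (Dom T (?A!\<pi>'' n)) \<and>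
      Comp T (?A!\<pi>'' n) (x'' n) = ?R!n \<and> [x'' n] \<in> C (Dom T (?A!\<pi>'' n)) \<and>
      (Dom T (?A!\<pi>'' n) \<notin> F' \<longrightarrow> iso (x'' n) \<and> (\<forall>k'<length ?R. \<pi>'' k' = \<pi>'' n \<longrightarrow> k' = n))"
    proof (cases "Dom T (A!?j) \<notin> F'")
      case True
      have pn: "\<pi>'' n = pos ?lsY ?j ?m" unfolding \<pi>''_def Let_def using True by simp
      have xn: "x'' n = Xf ?i ?l" unfolding x''_def Let_def using True by simp
      have Yj: "Ys!?j = map (Comp T (x ?i)) (Bf ?i)" using Ys1[OF il(1) True] .
      have mY: "?m < ?lsY!?j" using Yj m j lY by simp
      have bnd: "\<pi>'' n < length ?A" using pos_bound[of ?j ?lsY ?m] pn NA mY j lY by simp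
      have An: "?A!\<pi>'' n = Comp T (A!?j) (Comp T (x ?i) (Bf ?i!?m))"
        using fcoprod_nth[OF lY j, of ?m T] pn Yj m by simp
      have hxB: "hom (Comp T (x ?i) (Bf ?i!?m)) (Dom T (Bf ?i!?m)) (Dom T (A!?j))" using hB hx by auto
      have hAn: "hom (?A!\<pi>'' n) (Dom T (Bf ?i!?m)) V" using An hxB hA by auto
      have dR: "Dom T (?R!n) = Dom T (Ts!?i!?l)" using Rn comp_hom[OF hT hS] by (simp add: hom_def)
      have h1: "hom (x'' n) (Dom T (?R!n)) (Dom T (?A!\<pi>'' n))" using xn hxb dR hAn by (simp add: hom_def)
      have "Comp T (?A!\<pi>'' n) (x'' n) = Comp T (Comp T (A!?j) (Comp T (x ?i) (Bf ?i!?m))) (Xf ?i ?l)"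
        using An xn by simp
      also have "\<dots> = Comp T (A!?j) (Comp T (Comp T (x ?i) (Bf ?i!?m)) (Xf ?i ?l))"
        using assoc[OF hxb hxB hA] by simp
      also have "Comp T (Comp T (x ?i) (Bf ?i!?m)) (Xf ?i ?l) = Comp T (x ?i) (Ts!?i!?l)"
        using assoc[OF hxb hB hx] eB by simp
      also have "Comp T (A!?j) (Comp T (x ?i) (Ts!?i!?l)) = Comp T (S!?i) (Ts!?i!?l)"
        using assoc[OF hT hx hA] jwD(3)[OF a(4) il(1)] by simp
      finally have e1: "Comp T (?A!\<pi>'' n) (x'' n) = ?R!n" using Rn by simp
      have dA: "Dom T (?A!\<pi>'' n) = Dom T (Bf ?i!?m)" using hAn by (simp add: hom_def)
      have c1: "[x'' n] \<in> C (Dom T (?A!\<pi>'' n))" using jwD(4)[OF jwB il(2)] xn dA by simp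
      have nf: "iso (x'' n) \<and> (\<forall>k'<length ?R. \<pi>'' k' = \<pi>'' n \<longrightarrow> k' = n)" if nF: "Dom T (?A!\<pi>'' n) \<notin> F'"
      proof
        have nF': "Dom T (Bf ?i!?m) \<notin> F'" using nF dA by simp
        show "iso (x'' n)" using jwD(5)[OF jwB il(2) nF'] xn by simp
        show "\<forall>k'<length ?R. \<pi>'' k' = \<pi>'' n \<longrightarrow> k' = n"
        proof (intro allI impI)
          fix n2 assume n2: "n2 < length ?R" "\<pi>'' n2 = \<pi>'' n"
          let ?i2 = "fst (IL n2)" and ?l2 = "snd (IL n2)"
          have il2: "?i2 < length S" "?l2 < length (Ts!?i2)" "n2 = pos ?lsT ?i2 ?l2" using IL[OF n2(1)] by auto
          have j2: "\<pi> ?i2 < length A" using jwD(1)[OF a(4) il2(1)] .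
          have "\<pi> ?i2 = ?j"
          proof (cases "Dom T (A!\<pi> ?i2) \<notin> F'")
            case True2: True
            have jwB2: "jw C F' (Bf ?i2) (Ts!?i2) (Pf ?i2) (Xf ?i2)" using BPX[OF il2(1)] by blast
            have m2: "Pf ?i2 ?l2 < ?lsY!(\<pi> ?i2)" using jwD(1)[OF jwB2 il2(2)] Ys1[OF il2(1) True2] j2 lY by simp
            have "\<pi>'' n2 = pos ?lsY (\<pi> ?i2) (Pf ?i2 ?l2)" unfolding \<pi>''_def Let_def using True2 by simp
            then have eq: "pos ?lsY (\<pi> ?i2) (Pf ?i2 ?l2) = pos ?lsY ?j ?m" using n2(2) pn by simp
            have b1: "\<pi> ?i2 < length ?lsY" "?j < length ?lsY" using j2 j lY by auto
            show ?thesis using pos_inj[OF b1(1) m2 b1(2) mY eq] by blast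
          next
            case False2: False
            have "\<pi>'' n2 = pos ?lsY (\<pi> ?i2) 0" unfolding \<pi>''_def Let_def using False2 by simp
            then have eq: "pos ?lsY (\<pi> ?i2) 0 = pos ?lsY ?j ?m" using n2(2) pn by simp
            have m0: "0 < ?lsY!(\<pi> ?i2)" using Ys2[OF j2] False2 j2 lY by simp
            have b1: "\<pi> ?i2 < length ?lsY" "?j < length ?lsY" using j2 j lY by auto
            show ?thesis using pos_inj[OF b1(1) m0 b1(2) mY eq] by blast
          qed
          then have ii: "?i2 = ?i" using jwD(6)[OF a(4) il(1) True il2(1)] by simp
          have "\<pi>'' n2 = pos ?lsY ?j (Pf ?i ?l2)" unfolding \<pi>''_def Let_def using True ii by simp
          moreover have "Pf ?i ?l2 < ?lsY!?j" using jwD(1)[OF jwB, of ?l2] il2(2) ii Yj j lY by simp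
          moreover have b1: "?j < length ?lsY" using j lY by auto
          ultimately have "Pf ?i ?l2 = ?m" using pos_inj[OF b1 _ b1 mY] n2(2) pn by simp
          then have "?l2 = ?l" using jwD(6)[OF jwB il(2) nF'] il2(2) ii by simp
          then show "n2 = n" using il(3) il2(3) ii by simp
        qed
      qed
      show ?thesis using bnd h1 e1 c1 nf by blast
    next
      case False
      then have jF: "Dom T (A!?j) \<in> F'" by simp
      have pn: "\<pi>'' n = pos ?lsY ?j 0" unfolding \<pi>''_def Let_def using False by simp
      have xn: "x'' n = Comp T (x ?i) (Ts!?i!?l)" unfolding x''_def Let_def using False by simp
      have Yj: "Ys!?j = [Idt T (Dom T (A!?j))]" using Ys2[OF j jF] .
      have bnd: "\<pi>'' n < length ?A" using pos_bound[of ?j ?lsY 0] pn NA Yj j lY by simp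
      have An: "?A!\<pi>'' n = A!?j"
        using fcoprod_nth[OF lY j, of 0 T] pn Yj hA by simp
      have hxT: "hom (x'' n) (Dom T (Ts!?i!?l)) (Dom T (A!?j))" using xn hT hx by auto
      have dR: "Dom T (?R!n) = Dom T (Ts!?i!?l)" using Rn comp_hom[OF hT hS] by (simp add: hom_def)
      have h1: "hom (x'' n) (Dom T (?R!n)) (Dom T (?A!\<pi>'' n))" using hxT dR An by simp
      have e1: "Comp T (?A!\<pi>'' n) (x'' n) = ?R!n"
        using An xn assoc[OF hT hx hA] jwD(3)[OF a(4) il(1)] Rn by simp
      have "[Bf ?i!?m] \<in> C (Dom T (S!?i))" using U_single[OF u _ m] BPX[OF il(1)] by blast
      then have "fcoprod T [Bf ?i!?m] [[Xf ?i ?l]] \<in> C (Dom T (S!?i))"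
        by (rule C_cop[OF U_w[OF u]]) (use jwD(4)[OF jwB il(2)] in auto)
      then have TC: "[Ts!?i!?l] \<in> C (Dom T (S!?i))" using eB by (simp add: fcoprod_single)
      have "fcoprod T [x ?i] [[Ts!?i!?l]] \<in> C (Dom T (A!?j))"
        by (rule C_cop[OF U_w[OF u] jwD(4)[OF a(4) il(1)]]) (use TC hx in \<open>auto simp: hom_def\<close>)
      then have c1: "[x'' n] \<in> C (Dom T (?A!\<pi>'' n))" using xn An by (simp add: fcoprod_single)
      show ?thesis using bnd h1 e1 c1 An jF by simp
    qed
  qed
  have ob: "fVobj T V ?R" using fVobj_fcoprod[OF a(2) l] BPX by blast
  show ?thesis unfolding Jd_mem using a(1) ob A''C jw'' by blast
qed

end


context atcat
begin

lemma Jd_w: assumes u: "uni_wIndSys T C" and F': "is_family T F'" shows "wIndSys T (Jd C F')"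
  unfolding wIndSys_def full_tsubcat_def
proof (intro conjI)
  show "\<forall>V. V \<notin> Obj T \<longrightarrow> Jd C F' V = {}" unfolding Jd_def by auto
  show "\<forall>V\<in>Obj T. \<forall>S\<in>Jd C F' V. fVobj T V S" unfolding Jd_def by auto
  show "\<forall>V\<in>Obj T. \<forall>S\<in>Jd C F' V. \<forall>S'. fVobj T V S' \<and> fV_iso T S S' \<longrightarrow> S' \<in> Jd C F' V"
    using Jd_iso[OF _ _ _ u] by blast
  show "\<forall>g\<in>Arr T. \<forall>S\<in>Jd C F' (Cod T g). \<forall>P. fVobj T (Dom T g) P \<and> is_restriction T g S P \<longrightarrow> P \<in> Jd C F' (Dom T g)"
    using Jd_res[OF u F'] by blast
  show "\<forall>V\<in>Obj T. Jd C F' V \<noteq> {} \<longrightarrow> [Idt T V] \<in> Jd C F' V"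
    using U_basic[OF u] C_le_Jd[OF u, of F'] by (auto simp: le_fun_def)
  show "\<forall>V\<in>Obj T. \<forall>S\<in>Jd C F' V. \<forall>Ts. length Ts = length S \<and> (\<forall>i<length S. Ts ! i \<in> Jd C F' (Dom T (S ! i))) \<longrightarrow>
        fcoprod T S Ts \<in> Jd C F' V"
    using Jd_cop[OF u] by blast
qed

lemma Jd_uni: assumes u: "uni_wIndSys T C" and F': "is_family T F'" shows "uni_wIndSys T (Jd C F')"
proof -
  have n: "\<forall>V\<in>Obj T. Jd C F' V \<noteq> {}"
    using U_basic[OF u] C_le_Jd[OF u, of F'] by (auto simp: le_fun_def)
  have sp: "\<forall>V\<in>Obj T. \<forall>S S'. S @ S' \<in> Jd C F' V \<longrightarrow> S \<in> Jd C F' V \<and> S' \<in> Jd C F' V"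
    using Jd_split by blast
  show ?thesis unfolding uni_wIndSys_def using Jd_w[OF u F'] n sp by blast
qed

lemma wjoin_Jd: assumes u: "uni_wIndSys T C" and F': "is_family T F'"
  shows "wjoin T C (EFinf T F') = Jd C F'"
proof
  fix V
  show "wjoin T C (EFinf T F') V = Jd C F' V"
  proof
    show "wjoin T C (EFinf T F') V \<subseteq> Jd C F' V"
      unfolding wjoin_def using Jd_w[OF u F'] C_le_Jd[OF u] EF_le_Jd[OF u] by blast
    show "Jd C F' V \<subseteq> wjoin T C (EFinf T F') V"
      unfolding wjoin_def using Jd_le[OF u] by (auto simp: le_fun_def)
  qed
qed

lemma EF_le_LF: "EFinf T F \<le> LF T F" unfolding LF_def by (auto simp: le_fun_def)

theorem part6:
  assumes F: "is_family T F" and F': "is_family T F'" and FF: "F \<subseteq> F'"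
    and u: "uni_wIndSys T C" and nC: "nabla_u T C = F"
  shows "uni_wIndSys T (wjoin T C (EFinf T F')) \<and>
        nabla_u T (wjoin T C (EFinf T F')) = F' \<and>
        (\<forall>\<D>. uni_wIndSys T \<D> \<and> F' \<subseteq> nabla_u T \<D> \<longrightarrow>
           (C \<le> \<D> \<longleftrightarrow> wjoin T C (EFinf T F') \<le> \<D>))"
proof -
  have J: "wjoin T C (EFinf T F') = Jd C F'" using wjoin_Jd[OF u F'] .
  have Ju: "uni_wIndSys T (Jd C F')" using Jd_uni[OF u F'] .
  have RF: "uni_wIndSys T (RR F')" using RR_uni[OF F'] .
  have CR: "C \<le> RR F'" using RR_adj[OF u F'] nC FF by blast
  have LR: "LF T F' \<le> RR F'" using RR_adj[OF part2[OF F'] F'] nabla_LF[OF F'] by blast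
  have ER: "EFinf T F' \<le> RR F'" using EF_le_LF LR by (rule order_trans)
  have JR: "Jd C F' \<le> RR F'" using Jd_le[OF u U_w[OF RF] CR ER] .
  have n1: "nabla_u T (Jd C F') \<subseteq> F'" using mono_nabla[OF JR] nabla_RR by blast
  have n2: "F' \<subseteq> nabla_u T (Jd C F')"
  proof
    fix V assume VF: "V \<in> F'"
    have V: "V \<in> Obj T" using F' VF unfolding is_family_def by blast
    have "replicate 2 (Idt T V) \<in> LF T F' V" using rep2_LF[of V F'] V VF by blast
    then have "replicate 2 (Idt T V) \<in> EFinf T F' V" unfolding LF_def F0_def using V
      by (auto simp: fV_iso_def numeral_2_eq_2 dest: bij_betw_same_card)
    then have "replicate 2 (Idt T V) \<in> Jd C F' V" using EF_le_Jd[OF u, of F'] by (auto simp: le_fun_def)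
    then show "V \<in> nabla_u T (Jd C F')" unfolding nabla_u_def using V by blast
  qed
  have univ: "C \<le> D \<longleftrightarrow> Jd C F' \<le> D" if D: "uni_wIndSys T D" "F' \<subseteq> nabla_u T D" for D
  proof
    assume CD: "C \<le> D"
    have "EFinf T F' \<le> D" using EF_le_LF LF_le[OF D] by (rule order_trans)
    then show "Jd C F' \<le> D" using Jd_le[OF u U_w[OF D(1)] CD] by blast
  next
    assume "Jd C F' \<le> D" then show "C \<le> D" using C_le_Jd[OF u, of F'] by (rule order_trans[rotated])
  qed
  show ?thesis unfolding J using Ju n1 n2 univ by blast
qed

end

theorem mainTheorem18:
  fixes T :: "('o, 'm) cat"
  assumes "is_category T" and "atomic T" and "orbital T"
  shows
    "(\<forall>\<C>. uni_wIndSys T \<C> \<longrightarrow> is_family T (nabla_u T \<C>)) \<and>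
     (\<forall>\<F>. is_family T \<F> \<longrightarrow> uni_wIndSys T (\<lambda>V. F0 T V \<union> EFinf T \<F> V)) \<and>
     (\<forall>\<F> \<C>. is_family T \<F> \<and> uni_wIndSys T \<C> \<longrightarrow>
        ((\<lambda>V. F0 T V \<union> EFinf T \<F> V) \<le> \<C> \<longleftrightarrow> \<F> \<subseteq> nabla_u T \<C>)) \<and>
     (\<forall>\<F> \<F>'. is_family T \<F> \<and> is_family T \<F>' \<longrightarrow>
        ((\<lambda>V. F0 T V \<union> EFinf T \<F> V) \<le> (\<lambda>V. F0 T V \<union> EFinf T \<F>' V) \<longleftrightarrow> \<F> \<subseteq> \<F>')) \<and>
     (\<exists>R. (\<forall>\<F>. is_family T \<F> \<longrightarrow> uni_wIndSys T (R \<F>)) \<and>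
          (\<forall>\<C> \<F>. uni_wIndSys T \<C> \<and> is_family T \<F> \<longrightarrow> (nabla_u T \<C> \<subseteq> \<F> \<longleftrightarrow> \<C> \<le> R \<F>)) \<and>
          (\<forall>\<F> \<F>'. is_family T \<F> \<and> is_family T \<F>' \<longrightarrow> (R \<F> \<le> R \<F>' \<longleftrightarrow> \<F> \<subseteq> \<F>'))) \<and>
     (\<forall>\<F> \<F>' \<C>. is_family T \<F> \<and> is_family T \<F>' \<and> \<F> \<subseteq> \<F>' \<and>
        uni_wIndSys T \<C> \<and> nabla_u T \<C> = \<F> \<longrightarrow>
        uni_wIndSys T (wjoin T \<C> (EFinf T \<F>')) \<and>
        nabla_u T (wjoin T \<C> (EFinf T \<F>')) = \<F>' \<and>
        (\<forall>\<D>. uni_wIndSys T \<D> \<and> \<F>' \<subseteq> nabla_u T \<D> \<longrightarrow>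
           (\<C> \<le> \<D> \<longleftrightarrow> wjoin T \<C> (EFinf T \<F>') \<le> \<D>)))"

proof -
  interpret atcat T using assms by (unfold_locales) auto
  have c1: "\<forall>C. uni_wIndSys T C \<longrightarrow> is_family T (nabla_u T C)" using part1 by blast
  have c2: "\<forall>F. is_family T F \<longrightarrow> uni_wIndSys T (LF T F)" using part2 by blast
  have c3: "\<forall>F C. is_family T F \<and> uni_wIndSys T C \<longrightarrow> (LF T F \<le> C \<longleftrightarrow> F \<subseteq> nabla_u T C)" using part3 by blast
  have c4: "\<forall>F F'. is_family T F \<and> is_family T F' \<longrightarrow> (LF T F \<le> LF T F' \<longleftrightarrow> F \<subseteq> F')" using part4 by blast
  have c5: "\<exists>R. (\<forall>\<F>. is_family T \<F> \<longrightarrow> uni_wIndSys T (R \<F>)) \<and>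
          (\<forall>\<C> \<F>. uni_wIndSys T \<C> \<and> is_family T \<F> \<longrightarrow> (nabla_u T \<C> \<subseteq> \<F> \<longleftrightarrow> \<C> \<le> R \<F>)) \<and>
          (\<forall>\<F> \<F>'. is_family T \<F> \<and> is_family T \<F>' \<longrightarrow> (R \<F> \<le> R \<F>' \<longleftrightarrow> \<F> \<subseteq> \<F>'))"
    by (rule exI[of _ RR]) (use RR_uni RR_adj RR_ff in blast)
  have c6: "\<forall>F F' C. is_family T F \<and> is_family T F' \<and> F \<subseteq> F' \<and> uni_wIndSys T C \<and> nabla_u T C = F \<longrightarrow>
        uni_wIndSys T (wjoin T C (EFinf T F')) \<and>
        nabla_u T (wjoin T C (EFinf T F')) = F' \<and>
        (\<forall>\<D>. uni_wIndSys T \<D> \<and> F' \<subseteq> nabla_u T \<D> \<longrightarrow>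
           (C \<le> \<D> \<longleftrightarrow> wjoin T C (EFinf T F') \<le> \<D>))"
    using part6 by blast
  show ?thesis unfolding LF_def[symmetric]
    by (rule conjI c1 c2 c3 c4 c5 c6)+
qed



end
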